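(* Let $n\ge2$, $1\le i\le n$, $\epsilon\in\{0,1\}$, and let $p$ denote the quotient maps $\sqcap^n_{i,\epsilon}\to\widehat{\sqcap}^n_{i,\epsilon}$ and $\square^n\to\widehat{\square}^n_{i,\epsilon}$. Let $a,b$ be vertices of $\square^n$ such that $a\neq\{i\}$ if $\epsilon=1$, and $b\neq\{1,\dots,n\}\setminus\{i\}$ if $\epsilon=0$. Then the maps \[\mathfrak{C}^{\square}(p):\mathfrak{C}^{\square}(\sqcap^n_{i,\epsilon})(a,b)\to\mathfrak{C}^{\square}(\widehat{\sqcap}^n_{i,\epsilon})(pa,pb)\quad\text{and}\quad\mathfrak{C}^{\square}(p):\mathfrak{C}^{\square}(\square^n)(a,b)\to\mathfrak{C}^{\square}(\widehat{\square}^n_{i,\epsilon})(pa,pb)\] are isomorphisms of simplicial sets.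
   Context: Cubical sets: presheaves on the category $\square$ with objects $[1]^n$ and morphisms generated by faces $\partial_{i,\epsilon}$ (insert $\epsilon$ at coordinate $i$), degeneracies (delete a coordinate) and negative connections ($\gamma_{i,0}$ replaces $(x_i,x_{i+1})$ by $\max(x_i,x_{i+1})$); $\square^n$ is representable; its vertices are subsets of $\{1,\dots,n\}$ (a vertex is the set of coordinates equal to $1$). Boxes: $\sqcap^n_{i,\epsilon}\subseteq\square^n$ is the union of all codimension-one faces of $\square^n$ except the image of $\partial_{i,\epsilon}$. The critical edge $e_{i,\epsilon}$ is the edge from $\emptyset$ to $\{i\}$ if $\epsilon=1$, and from $\{1,\dots,n\}\setminus\{i\}$ to $\{1,\dots,n\}$ if $\epsilon=0$. $\widehat{\square}^n_{i,\epsilon}$ and $\widehat{\sqcap}^n_{i,\epsilon}$ are the quotients of $\square^n$ and $\sqcap^n_{i,\epsilon}$ collapsing the critical edge to a point. Rigidification: $I_m$ is $m$ copies of $\square^1$ glued end to start (with distinguished endpoints); $\mathbb{I}_{k,m}$ is $I_k,\square^2,I_{m-2-k}$ glued end to start through $\emptyset,\{1,2\}$ of $\square^2$; $s_{k,m},t_{k,m}:I_m\to\mathbb{I}_{k,m}$ are the identity on the other edges and send edges $k+1,k+2$ to $\emptyset\to\{2\}\to\{1,2\}$, resp. $\emptyset\to\{1\}\to\{1,2\}$. For a cubical set $S$ with vertices $a,b$, $\mathfrak{C}^{\square}_{path}(S)(a,b)$ is the set of maps $I_m\to S$ sending endpoints to $a,b$, modulo the equivalence generated by $\gamma\sim\gamma'\circ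 h$ ($h$ endpoint-preserving), preordered by the reflexive-transitive closure of $[F\circ s_{k,m}]\leadsto[F\circ t_{k,m}]$; concatenation gives a preorder-enriched category. $\mathfrak{C}^{\square}$ is the left Kan extension along Yoneda of $[1]^n\mapsto N(\mathfrak{C}^{\square}_{path}(\square^n))$ (nerve homwise); objects of $\mathfrak{C}^{\square}(S)$ are the vertices of $S$. *)

theory Defs
  imports Main
begin

text \<open>A vertex of [1]^n is the set of coordinates (in {1..n}) equal to 1.
  A morphism [1]^m -> [1]^n of the cube category is represented by its
  (faithful) action on vertices, extended by {} outside Pow {1..m}.\<close>

type_synonym vmap = "nat set \<Rightarrow> nat set"

definition rest :: "nat \<Rightarrow> vmap \<Rightarrow> vmap" where
  "rest m f = (\<lambda>A. if A \<subseteq> {1..m} then f A else {})"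

text \<open>face i e : [1]^(n-1) -> [1]^n inserts e at coordinate i.\<close>
definition face :: "nat \<Rightarrow> bool \<Rightarrow> vmap" where
  "face i e A = {j\<in>A. j < i} \<union> Suc ` {j\<in>A. i \<le> j} \<union> (if e then {i} else {})"

text \<open>degen i : [1]^n -> [1]^(n-1) deletes coordinate i.\<close>
definition degen :: "nat \<Rightarrow> vmap" where
  "degen i A = {j\<in>A. j < i} \<union> (\<lambda>j. j - 1) ` {j\<in>A. i < j}"

text \<open>conn i (negative connection gamma_{i,0}) : [1]^n -> [1]^(n-1)
  replaces (x_i, x_(i+1)) by max(x_i, x_(i+1)).\<close>
definition conn :: "nat \<Rightarrow> vmap" where
  "conn i A = {j\<in>A. j < i} \<union> (if i \<in> A \<or> Suc i \<in> A then {i} else {})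
      \<union> (\<lambda>j. j - 1) ` {j\<in>A. Suc i < j}"

inductive cmor :: "nat \<Rightarrow> nat \<Rightarrow> vmap \<Rightarrow> bool" where
  cid: "cmor m m (rest m id)"
| cface: "cmor l m f \<Longrightarrow> 1 \<le> i \<Longrightarrow> i \<le> Suc m \<Longrightarrow> cmor l (Suc m) (rest l (face i e \<circ> f))"
| cdegen: "cmor l (Suc m) f \<Longrightarrow> 1 \<le> i \<Longrightarrow> i \<le> Suc m \<Longrightarrow> cmor l m (rest l (degen i \<circ> f))"
| cconn: "cmor l (Suc (Suc m)) f \<Longrightarrow> 1 \<le> i \<Longrightarrow> i \<le> Suc m \<Longrightarrow> cmor l (Suc m) (rest l (conn i \<circ> f))"

text \<open>A cubical set: cells in each dimension, and the action
  act m m' f : S_m' -> S_m of a cube morphism f : [1]^m -> [1]^m'.\<close>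
type_synonym 'a cset = "(nat \<Rightarrow> 'a set) \<times> (nat \<Rightarrow> nat \<Rightarrow> vmap \<Rightarrow> 'a \<Rightarrow> 'a)"

definition cells :: "'a cset \<Rightarrow> nat \<Rightarrow> 'a set" where "cells S = fst S"
definition act :: "'a cset \<Rightarrow> nat \<Rightarrow> nat \<Rightarrow> vmap \<Rightarrow> 'a \<Rightarrow> 'a" where "act S = snd S"

definition cube :: "nat \<Rightarrow> vmap cset" where
  "cube n = ((\<lambda>m. {f. cmor m n f}), (\<lambda>m m' f x. rest m (x \<circ> f)))"

definition box :: "nat \<Rightarrow> nat \<Rightarrow> bool \<Rightarrow> vmap cset" where
  "box n i e = ((\<lambda>m. {f. cmor m n f \<and> (\<exists>j d g. 1 \<le> j \<and> j \<le> n \<and> (j, d) \<noteq> (i, e)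
                     \<and> cmor m (n - 1) g \<and> f = rest m (face j d \<circ> g))}),
                (\<lambda>m m' f x. rest m (x \<circ> f)))"

definition crit :: "nat \<Rightarrow> nat \<Rightarrow> bool \<Rightarrow> vmap" where
  "crit n i e = (if e then rest 1 (\<lambda>A. if 1 \<in> A then {i} else {})
                 else rest 1 (\<lambda>A. if 1 \<in> A then {1..n} else {1..n} - {i}))"

text \<open>The m-cells in the image of the critical edge (collapsed to a single cell).\<close>
definition collapsed :: "nat \<Rightarrow> nat \<Rightarrow> bool \<Rightarrow> nat \<Rightarrow> vmap set" where
  "collapsed n i e m = {rest m (crit n i e \<circ> y) | y. cmor m 1 y}"

definition qcls :: "'a set \<Rightarrow> 'a \<Rightarrow> 'a set" where
  "qcls C x = (if x \<in> C then C else {x})"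

text \<open>Quotient of a cubical set collapsing the subcomplex C to a point
  (pushout along C -> point).\<close>
definition quot :: "'a cset \<Rightarrow> (nat \<Rightarrow> 'a set) \<Rightarrow> 'a set cset" where
  "quot S C = ((\<lambda>m. qcls (C m) ` cells S m),
               (\<lambda>m m' f c. qcls (C m) (act S m m' f (SOME x. x \<in> c))))"

definition cube_hat :: "nat \<Rightarrow> nat \<Rightarrow> bool \<Rightarrow> vmap set cset" where
  "cube_hat n i e = quot (cube n) (collapsed n i e)"

definition box_hat :: "nat \<Rightarrow> nat \<Rightarrow> bool \<Rightarrow> vmap set cset" where
  "box_hat n i e = quot (box n i e) (collapsed n i e)"

definition qmap :: "nat \<Rightarrow> nat \<Rightarrow> bool \<Rightarrow> nat \<Rightarrow> vmap \<Rightarrow> vmap set" where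
  "qmap n i e m = qcls (collapsed n i e m)"

definition vtx :: "nat set \<Rightarrow> vmap" where
  "vtx A = rest 0 (\<lambda>_. A)"

text \<open>A map I_m -> square^N (by Yoneda) is a composable list of m 1-cells;
  the source / target of a 1-cell e are e {} and e {1}.\<close>
definition is_path :: "nat \<Rightarrow> nat set \<Rightarrow> nat set \<Rightarrow> vmap list \<Rightarrow> bool" where
  "is_path N u w es \<longleftrightarrow> u \<subseteq> {1..N} \<and> w \<subseteq> {1..N} \<and> (\<forall>e\<in>set es. cmor 1 N e) \<and>
     (if es = [] then u = w
      else hd es {} = u \<and> last es {1} = w \<and>
           (\<forall>j. Suc j < length es \<longrightarrow> (es ! j) {1} = (es ! Suc j) {}))"

text \<open>gamma ~ gamma' o h for endpoint-preserving h : I_m -> I_m' amounts to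
  inserting degenerate edges.\<close>
definition pins :: "nat \<Rightarrow> nat set \<Rightarrow> nat set \<Rightarrow> (vmap list \<times> vmap list) set" where
  "pins N u w = {(es, es'). is_path N u w es \<and> is_path N u w es' \<and>
      (\<exists>ps qs v. es = ps @ qs \<and> es' = ps @ [rest 1 (\<lambda>_. v)] @ qs)}"

definition pequiv :: "nat \<Rightarrow> nat set \<Rightarrow> nat set \<Rightarrow> (vmap list \<times> vmap list) set" where
  "pequiv N u w = (pins N u w \<union> (pins N u w)\<inverse>)\<^sup>*"

text \<open>[F o s_{k,m}] ~> [F o t_{k,m}] for F : II_{k,m} -> square^N with 2-cell s.\<close>
definition pstep :: "nat \<Rightarrow> nat set \<Rightarrow> nat set \<Rightarrow> (vmap list \<times> vmap list) set" where
  "pstep N u w = {(es, es'). is_path N u w es \<and> is_path N u w es' \<and>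
      (\<exists>ps qs s. cmor 2 N s \<and>
         es = ps @ [rest 1 (s \<circ> face 1 False), rest 1 (s \<circ> face 2 True)] @ qs \<and>
         es' = ps @ [rest 1 (s \<circ> face 2 False), rest 1 (s \<circ> face 1 True)] @ qs)}"

definition pleq :: "nat \<Rightarrow> nat set \<Rightarrow> nat set \<Rightarrow> (vmap list \<times> vmap list) set" where
  "pleq N u w = (pequiv N u w \<union> pstep N u w)\<^sup>*"

text \<open>k-simplices of the nerve of C_path(square^N)(u,w), by representatives
  (identified below up to pointwise path equivalence).\<close>
definition nsimp :: "nat \<Rightarrow> nat set \<Rightarrow> nat set \<Rightarrow> nat \<Rightarrow> vmap list list \<Rightarrow> bool" where
  "nsimp N u w k gs \<longleftrightarrow> length gs = Suc k \<and> (\<forall>g\<in>set gs. is_path N u w g) \<and>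
      (\<forall>j<k. (gs ! j, gs ! Suc j) \<in> pleq N u w)"

section \<open>C^square(S) as the colimit (left Kan extension), level k\<close>

text \<open>A generator at level k: a cube x in S_N together with a k-simplex of
  C^square(square^N)(u,w).\<close>
type_synonym 'a datum = "nat \<times> 'a \<times> nat set \<times> nat set \<times> vmap list list"

definition vert :: "'a cset \<Rightarrow> nat \<Rightarrow> 'a \<Rightarrow> nat set \<Rightarrow> 'a" where
  "vert S N x u = act S 0 N (rest 0 (\<lambda>_. u)) x"

fun dvalid :: "'a cset \<Rightarrow> nat \<Rightarrow> 'a datum \<Rightarrow> bool" where
  "dvalid S k (N, x, u, w, gs) \<longleftrightarrow> x \<in> cells S N \<and> nsimp N u w k gs"

fun dsrc :: "'a cset \<Rightarrow> 'a datum \<Rightarrow> 'a" where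
  "dsrc S (N, x, u, w, gs) = vert S N x u"

fun dtgt :: "'a cset \<Rightarrow> 'a datum \<Rightarrow> 'a" where
  "dtgt S (N, x, u, w, gs) = vert S N x w"

definition cvalid :: "'a cset \<Rightarrow> nat \<Rightarrow> 'a \<Rightarrow> 'a \<Rightarrow> 'a datum list \<Rightarrow> bool" where
  "cvalid S k a b ds \<longleftrightarrow> a \<in> cells S 0 \<and> b \<in> cells S 0 \<and> (\<forall>d\<in>set ds. dvalid S k d) \<and>
     (if ds = [] then a = b
      else dsrc S (hd ds) = a \<and> dtgt S (last ds) = b \<and>
           (\<forall>j. Suc j < length ds \<longrightarrow> dtgt S (ds ! j) = dsrc S (ds ! Suc j)))"

text \<open>Generating relations of the colimit: change of representatives,
  transport along cube maps, composition inside one cube, identities.\<close>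
definition basic :: "'a cset \<Rightarrow> nat \<Rightarrow> ('a datum list \<times> 'a datum list) set" where
  "basic S k =
     {([(N, x, u, w, gs)], [(N, x, u, w, gs')]) | N x u w gs gs'.
        list_all2 (\<lambda>g g'. (g, g') \<in> pequiv N u w) gs gs'}
   \<union> {([(M, act S M N f x, u, w, gs)], [(N, x, f u, f w, map (map (\<lambda>e. rest 1 (f \<circ> e))) gs)])
        | M N f x u w gs. cmor M N f \<and> x \<in> cells S N}
   \<union> {([(N, x, u, v, gs), (N, x, v, w, hs)], [(N, x, u, w, map2 (@) gs hs)])
        | N x u v w gs hs. True}
   \<union> {([(N, x, u, u, replicate (Suc k) [])], []) | N x u. True}"

definition crel :: "'a cset \<Rightarrow> nat \<Rightarrow> ('a datum list \<times> 'a datum list) set" where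
  "crel S k = {(ds @ l @ es, ds @ r @ es) | ds l r es. (l, r) \<in> basic S k \<and>
      (\<exists>a b. cvalid S k a b (ds @ l @ es) \<and> cvalid S k a b (ds @ r @ es))}"

definition ceq :: "'a cset \<Rightarrow> nat \<Rightarrow> ('a datum list \<times> 'a datum list) set" where
  "ceq S k = (crel S k \<union> (crel S k)\<inverse>)\<^sup>*"

definition Chom :: "'a cset \<Rightarrow> nat \<Rightarrow> 'a \<Rightarrow> 'a \<Rightarrow> 'a datum list set set" where
  "Chom S k a b = {ceq S k `` {ds} | ds. cvalid S k a b ds}"

fun dmap :: "(nat \<Rightarrow> 'a \<Rightarrow> 'b) \<Rightarrow> 'a datum \<Rightarrow> 'b datum" where
  "dmap phi (N, x, u, w, gs) = (N, phi N x, u, w, gs)"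

definition Cmap :: "'b cset \<Rightarrow> (nat \<Rightarrow> 'a \<Rightarrow> 'b) \<Rightarrow> nat \<Rightarrow> 'a datum list set \<Rightarrow> 'b datum list set" where
  "Cmap T phi k c = ceq T k `` {map (dmap phi) (SOME ds. ds \<in> c)}"

end

theory Submission
  imports Defs
begin


lemma rest_out: "\<not> A \<subseteq> {1..m} \<Longrightarrow> rest m f A = {}" by (simp add: rest_def)
lemma rest_in: "A \<subseteq> {1..m} \<Longrightarrow> rest m f A = f A" by (simp add: rest_def)
lemma rest_rest: "rest m (rest m f) = rest m f" by (auto simp: rest_def fun_eq_iff)

lemma face_range: "A \<subseteq> {1..m} \<Longrightarrow> 1 \<le> i \<Longrightarrow> i \<le> Suc m \<Longrightarrow> face i e A \<subseteq> {1..Suc m}"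
  by (auto simp: face_def)
lemma degen_range: "A \<subseteq> {1..Suc m} \<Longrightarrow> 1 \<le> i \<Longrightarrow> i \<le> Suc m \<Longrightarrow> degen i A \<subseteq> {1..m}"
  by (fastforce simp: degen_def)
lemma conn_range: "A \<subseteq> {1..Suc (Suc m)} \<Longrightarrow> 1 \<le> i \<Longrightarrow> i \<le> Suc m \<Longrightarrow> conn i A \<subseteq> {1..Suc m}"
  unfolding conn_def by (auto; force)
lemma face_mono: "A \<subseteq> B \<Longrightarrow> face i e A \<subseteq> face i e B" by (auto simp: face_def)
lemma degen_mono: "A \<subseteq> B \<Longrightarrow> degen i A \<subseteq> degen i B" by (auto simp: degen_def)
lemma conn_mono: "A \<subseteq> B \<Longrightarrow> conn i A \<subseteq> conn i B" by (auto simp: conn_def)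

lemma basic_step:
  assumes IH: "(\<forall>A. \<not> A \<subseteq> {1..l} \<longrightarrow> f A = {}) \<and> (\<forall>A. A \<subseteq> {1..l} \<longrightarrow> f A \<subseteq> {1..m})
     \<and> (\<forall>A B. A \<subseteq> B \<longrightarrow> B \<subseteq> {1..l} \<longrightarrow> f A \<subseteq> f B)"
  and R: "\<And>A. A \<subseteq> {1..m} \<Longrightarrow> h A \<subseteq> {1..m'}"
  and M: "\<And>A B. A \<subseteq> B \<Longrightarrow> h A \<subseteq> h B"
  shows "(\<forall>A. \<not> A \<subseteq> {1..l} \<longrightarrow> rest l (h \<circ> f) A = {}) \<and> (\<forall>A. A \<subseteq> {1..l} \<longrightarrow> rest l (h \<circ> f) A \<subseteq> {1..m'})
     \<and> (\<forall>A B. A \<subseteq> B \<longrightarrow> B \<subseteq> {1..l} \<longrightarrow> rest l (h \<circ> f) A \<subseteq> rest l (h \<circ> f) B)"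
proof (intro conjI allI impI)
  fix A assume "\<not> A \<subseteq> {1..l}" then show "rest l (h \<circ> f) A = {}" by (simp add: rest_def)
next
  fix A assume a: "A \<subseteq> {1..l}"
  then show "rest l (h \<circ> f) A \<subseteq> {1..m'}" using IH R by (simp add: rest_def)
next
  fix A B assume a: "A \<subseteq> B" "B \<subseteq> {1..l}"
  then have "A \<subseteq> {1..l}" by blast
  then show "rest l (h \<circ> f) A \<subseteq> rest l (h \<circ> f) B" using IH M a by (simp add: rest_def)
qed

lemma cmor_basic:
  "cmor l m f \<Longrightarrow> (\<forall>A. \<not> A \<subseteq> {1..l} \<longrightarrow> f A = {}) \<and> (\<forall>A. A \<subseteq> {1..l} \<longrightarrow> f A \<subseteq> {1..m})
     \<and> (\<forall>A B. A \<subseteq> B \<longrightarrow> B \<subseteq> {1..l} \<longrightarrow> f A \<subseteq> f B)"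
proof (induction rule: cmor.induct)
  case (cid m) then show ?case by (auto simp: rest_def)
next
  case (cface l m f i e) then show ?case
    by (intro basic_step face_range face_mono) auto
next
  case (cdegen l m f i) then show ?case
    by (intro basic_step degen_range degen_mono) auto
next
  case (cconn l m f i) then show ?case
    by (intro basic_step conn_range conn_mono) auto
qed

lemma cmor_supp: "cmor l m f \<Longrightarrow> \<not> A \<subseteq> {1..l} \<Longrightarrow> f A = {}"
  by (drule cmor_basic) (elim conjE, erule allE, erule impE, assumption)
lemma cmor_range: "cmor l m f \<Longrightarrow> A \<subseteq> {1..l} \<Longrightarrow> f A \<subseteq> {1..m}"
  by (drule cmor_basic) (elim conjE, erule allE[where x=A] , erule impE, assumption)
lemma cmor_mono: "cmor l m f \<Longrightarrow> A \<subseteq> B \<Longrightarrow> B \<subseteq> {1..l} \<Longrightarrow> f A \<subseteq> f B"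
proof -
  assume "cmor l m f" "A \<subseteq> B" "B \<subseteq> {1..l}"
  moreover have "\<forall>A B. A \<subseteq> B \<longrightarrow> B \<subseteq> {1..l} \<longrightarrow> f A \<subseteq> f B" using cmor_basic[OF \<open>cmor l m f\<close>] by (elim conjE)
  ultimately show ?thesis by blast
qed
lemma cmor_rest: "cmor l m f \<Longrightarrow> rest l f = f"
  by (rule ext) (simp add: rest_def cmor_supp)

lemma cmor_comp: "cmor m p g \<Longrightarrow> cmor l m f \<Longrightarrow> cmor l p (rest l (g \<circ> f))"
proof (induction arbitrary: rule: cmor.induct)
  case (cid m)
  have "rest l (rest m id \<circ> f) = f"
    using cmor_range[OF cid] cmor_supp[OF cid] by (auto simp: rest_def fun_eq_iff)
  then show ?case using cid by metis
next
  case (cface m' p' g i e)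
  have "rest l (rest m' (face i e \<circ> g) \<circ> f) = rest l (face i e \<circ> rest l (g \<circ> f))"
    using cmor_range[OF cface.prems] by (auto simp: rest_def fun_eq_iff)
  then show ?case using cface cmor.cface by metis
next
  case (cdegen m' p' g i)
  have "rest l (rest m' (degen i \<circ> g) \<circ> f) = rest l (degen i \<circ> rest l (g \<circ> f))"
    using cmor_range[OF cdegen.prems] by (auto simp: rest_def fun_eq_iff)
  then show ?case using cdegen cmor.cdegen by metis
next
  case (cconn m' p' g i)
  have "rest l (rest m' (conn i \<circ> g) \<circ> f) = rest l (conn i \<circ> rest l (g \<circ> f))"
    using cmor_range[OF cconn.prems] by (auto simp: rest_def fun_eq_iff)
  then show ?case using cconn cmor.cconn by metis
qed

lemma cmor_zero: "cmor l 0 (rest l (\<lambda>_. {}))"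
proof (induction l)
  case 0
  have "rest 0 id = rest 0 (\<lambda>_. {})" by (auto simp: rest_def fun_eq_iff)
  then show ?case using cmor.cid[of 0] by simp
next
  case (Suc l)
  have D: "cmor (Suc l) l (rest (Suc l) (degen 1 \<circ> rest (Suc l) id))"
    using cmor.cdegen[OF cmor.cid[of "Suc l"], of 1] by simp
  have "rest (Suc l) (rest l (\<lambda>_. {}) \<circ> rest (Suc l) (degen 1 \<circ> rest (Suc l) id)) = rest (Suc l) (\<lambda>_. {})"
    using cmor_range[OF D] by (auto simp: rest_def fun_eq_iff)
  then show ?case using cmor_comp[OF Suc D] by simp
qed

lemma cmor_const: "v \<subseteq> {1..m} \<Longrightarrow> cmor l m (rest l (\<lambda>_. v))"
proof (induction m arbitrary: v)
  case 0 then show ?case using cmor_zero by auto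
next
  case (Suc m)
  define v' where "v' = v - {Suc m}"
  have v': "v' \<subseteq> {1..m}" using Suc.prems by (auto simp: v'_def)
  have "rest l (face (Suc m) (Suc m \<in> v) \<circ> rest l (\<lambda>_. v')) = rest l (\<lambda>_. v)"
    using v' by (auto simp: rest_def fun_eq_iff face_def v'_def)
  then show ?case using cmor.cface[OF Suc.IH[OF v'], of "Suc m" "Suc m \<in> v"] by simp
qed

lemma vtx_cmor: "v \<subseteq> {1..m} \<Longrightarrow> cmor 0 m (vtx v)"
  unfolding vtx_def by (rule cmor_const)

lemma cmor0_vtx: "cmor 0 m f \<Longrightarrow> f = vtx (f {}) \<and> f {} \<subseteq> {1..m}"
proof
  assume f: "cmor 0 m f"
  show "f = vtx (f {})"
  proof
    fix A show "f A = vtx (f {}) A"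
      using cmor_supp[OF f, of A] by (cases "A = {}") (auto simp: vtx_def rest_def)
  qed
  show "f {} \<subseteq> {1..m}" using cmor_range[OF f] by simp
qed

lemma vtx_inj: "vtx u = vtx v \<longleftrightarrow> u = v"
  by (auto simp: vtx_def rest_def fun_eq_iff)

definition edge :: "nat set \<Rightarrow> nat set \<Rightarrow> vmap" where
  "edge u w = rest 1 (\<lambda>A. if 1 \<in> A then w else u)"

lemma edge_vals[simp]: "edge u w {} = u" "edge u w {1} = w"
  by (auto simp: edge_def rest_def)

lemma cmor1_edge: "cmor 1 m f \<Longrightarrow> f = edge (f {}) (f {1})"
proof -
  assume f: "cmor 1 m f"
  have A: "A \<subseteq> {1..1} \<Longrightarrow> A = {} \<or> A = {1}" for A :: "nat set" by auto
  show ?thesis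
  proof
    fix A show "f A = edge (f {}) (f {1}) A"
    proof (cases "A \<subseteq> {1..1}")
      case True then show ?thesis using A[OF True] by (auto simp: edge_def rest_def)
    next
      case False then show ?thesis using cmor_supp[OF f False] by (simp add: edge_def rest_def)
    qed
  qed
qed

lemma cmor1_mono: "cmor 1 m f \<Longrightarrow> f {} \<subseteq> f {1}"
  using cmor_mono[of 1 m f "{}" "{1}"] by auto

lemma edge_const: "edge v v = rest 1 (\<lambda>_. v)"
  by (auto simp: edge_def rest_def fun_eq_iff)

lemma face_cell: "1 \<le> j \<Longrightarrow> j \<le> Suc m \<Longrightarrow> cmor m (Suc m) (rest m (face j d))"
proof -
  assume "1 \<le> j" "j \<le> Suc m"
  have "rest m (face j d \<circ> rest m id) = rest m (face j d)" by (auto simp: rest_def fun_eq_iff)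
  with cmor.cface[OF cmor.cid[of m] \<open>1 \<le> j\<close> \<open>j \<le> Suc m\<close>, of d]
  show ?thesis by simp
qed

lemma face_inj: "inj_on (face j d) UNIV"
proof (rule inj_onI)
  fix A B assume h: "face j d A = face j d B"
  have "A = {x. (x < j \<and> x \<in> face j d A) \<or> (j \<le> x \<and> Suc x \<in> face j d A)}" for A
    by (auto simp: face_def)
  then show "A = B" using h by metis
qed

lemma face_degen: "j \<ge> 1 \<Longrightarrow> face j (j \<in> A) (degen j A) = A"
proof (rule set_eqI)
  fix x assume j: "j \<ge> 1"
  show "x \<in> face j (j \<in> A) (degen j A) \<longleftrightarrow> x \<in> A"
  proof (cases "x < j")
    case True then show ?thesis by (auto simp: face_def degen_def)
  next
    case False
    show ?thesis
    proof (cases "x = j")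
      case True then show ?thesis by (auto simp: face_def degen_def)
    next
      case F2: False
      then have xj: "x > j" using False by simp
      define y where "y = x - 1"
      have y: "x = Suc y" "y \<ge> j" using xj by (auto simp: y_def)
      have "x \<in> face j (j \<in> A) (degen j A) \<longleftrightarrow> y \<in> degen j A"
        using y xj by (auto simp: face_def)
      also have "\<dots> \<longleftrightarrow> x \<in> A" using y j
        by (auto simp: degen_def image_iff)
      finally show ?thesis .
    qed
  qed
qed


declare One_nat_def[simp del]

lemma is_path_Nil[simp]: "is_path N u w [] \<longleftrightarrow> u = w \<and> u \<subseteq> {1..N}"
  by (auto simp: is_path_def)

lemma is_path_Cons: "is_path N u w (x # es) \<longleftrightarrow>
   cmor 1 N x \<and> x {} = u \<and> u \<subseteq> {1..N} \<and> is_path N (x {1}) w es"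
proof (cases "es = []")
  case True
  then show ?thesis using cmor_range[of 1 N x "{1}"] by (auto simp: is_path_def)
next
  case False
  have idx: "(\<forall>j. Suc j < length (x # es) \<longrightarrow> ((x # es) ! j) {1} = ((x # es) ! Suc j) {}) \<longleftrightarrow>
     x {1} = hd es {} \<and> (\<forall>j. Suc j < length es \<longrightarrow> (es ! j) {1} = (es ! Suc j) {})"
  proof
    assume h: "\<forall>j. Suc j < length (x # es) \<longrightarrow> ((x # es) ! j) {1} = ((x # es) ! Suc j) {}"
    have "x {1} = hd es {}" using h[rule_format, of 0] False by (simp add: hd_conv_nth)
    moreover have "\<forall>j. Suc j < length es \<longrightarrow> (es ! j) {1} = (es ! Suc j) {}"
      using h by (metis Suc_mono length_Cons nth_Cons_Suc)
    ultimately show "x {1} = hd es {} \<and> (\<forall>j. Suc j < length es \<longrightarrow> (es ! j) {1} = (es ! Suc j) {})" by blast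
  next
    assume h: "x {1} = hd es {} \<and> (\<forall>j. Suc j < length es \<longrightarrow> (es ! j) {1} = (es ! Suc j) {})"
    show "\<forall>j. Suc j < length (x # es) \<longrightarrow> ((x # es) ! j) {1} = ((x # es) ! Suc j) {}"
    proof (intro allI impI)
      fix j assume "Suc j < length (x # es)"
      then show "((x # es) ! j) {1} = ((x # es) ! Suc j) {}"
        using h False by (cases j) (auto simp: hd_conv_nth)
    qed
  qed
  show ?thesis
    using False cmor_range[of 1 N x "{1}"] hd_in_set[OF False]
    unfolding is_path_def idx by (auto simp: last.simps)
qed

lemma is_path_append: "is_path N u w (A @ B) \<longleftrightarrow> (\<exists>v. is_path N u v A \<and> is_path N v w B)"
proof (induction A arbitrary: u)
  case Nil
  have "is_path N u w B \<Longrightarrow> u \<subseteq> {1..N}"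
    by (cases B) (auto simp: is_path_Cons)
  then show ?case by auto
next
  case (Cons x A) then show ?case by (auto simp: is_path_Cons)
qed

lemma is_path_sub: "is_path N u w es \<Longrightarrow> u \<subseteq> {1..N} \<and> w \<subseteq> {1..N}"
  by (simp add: is_path_def)

lemma is_path_mono: "is_path N u w es \<Longrightarrow> u \<subseteq> w \<and> (\<forall>e\<in>set es. u \<subseteq> e {} \<and> e {} \<subseteq> e {1} \<and> e {1} \<subseteq> w)"
proof (induction es arbitrary: u)
  case Nil then show ?case by simp
next
  case (Cons x es)
  then have x: "cmor 1 N x" "x {} = u" "is_path N (x {1}) w es" by (auto simp: is_path_Cons)
  have m: "x {} \<subseteq> x {1}" using cmor1_mono[OF x(1)] .
  note IH = Cons.IH[OF x(3)]
  have "u \<subseteq> w" using IH m x(2) by (meson order_trans)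
  moreover have "\<forall>e\<in>set (x # es). u \<subseteq> e {} \<and> e {} \<subseteq> e {1} \<and> e {1} \<subseteq> w"
  proof
    fix e assume "e \<in> set (x # es)"
    then consider "e = x" | "e \<in> set es" by auto
    then show "u \<subseteq> e {} \<and> e {} \<subseteq> e {1} \<and> e {1} \<subseteq> w"
    proof cases
      case 1 then show ?thesis using IH m x(2) by (meson order_trans order_refl)
    next
      case 2 then show ?thesis using IH m x(2) by (meson order_trans)
    qed
  qed
  ultimately show ?case by blast
qed

definition mp :: "vmap \<Rightarrow> vmap list \<Rightarrow> vmap list" where
  "mp g es = map (\<lambda>e. rest 1 (g \<circ> e)) es"

lemma mp_simps[simp]: "mp g [] = []" "mp g (x # es) = rest 1 (g \<circ> x) # mp g es"
  "mp g (A @ B) = mp g A @ mp g B"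
  by (auto simp: mp_def)

lemma rest1_comp_vals[simp]: "rest 1 (g \<circ> e) {} = g (e {})" "rest 1 (g \<circ> e) {1} = g (e {1})"
  by (auto simp: rest_def)

lemma path_map: "cmor N M g \<Longrightarrow> is_path N u w es \<Longrightarrow> is_path M (g u) (g w) (mp g es)"
proof (induction es arbitrary: u)
  case Nil
  then have "u = w" "u \<subseteq> {1..N}" by auto
  then show ?case using cmor_range[OF Nil(1), of u] by simp
next
  case (Cons x es)
  then have x: "cmor 1 N x" "x {} = u" "u \<subseteq> {1..N}" "is_path N (x {1}) w es" by (auto simp: is_path_Cons)
  show ?case using Cons.IH[OF Cons(2) x(4)] x cmor_comp[OF Cons(2) x(1)] cmor_range[OF Cons(2) x(3)]
    by (simp add: is_path_Cons)
qed

lemma const_edge: "cmor 1 N c \<Longrightarrow> c {} = c {1} \<Longrightarrow> c = rest 1 (\<lambda>_. c {})"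
  using cmor1_edge[of N c] edge_const by metis

lemma pequiv_remove:
  assumes "is_path N u w (ps @ [rest 1 (\<lambda>_. v)] @ qs)"
  shows "(ps @ [rest 1 (\<lambda>_. v)] @ qs, ps @ qs) \<in> pequiv N u w" "is_path N u w (ps @ qs)"
proof -
  have cv: "rest 1 (\<lambda>_. v) {} = v" "rest 1 (\<lambda>_. v) {1} = v" by (auto simp: rest_def)
  from assms obtain v1 v2 where "is_path N u v1 ps" "is_path N v1 v2 [rest 1 (\<lambda>_. v)]" "is_path N v2 w qs"
    unfolding is_path_append by blast
  then show p: "is_path N u w (ps @ qs)" using cv by (auto simp: is_path_append is_path_Cons)
  have "(ps @ qs, ps @ [rest 1 (\<lambda>_. v)] @ qs) \<in> pins N u w"
    unfolding pins_def using p assms by blast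
  then show "(ps @ [rest 1 (\<lambda>_. v)] @ qs, ps @ qs) \<in> pequiv N u w"
    unfolding pequiv_def by blast
qed

definition ncst :: "vmap \<Rightarrow> bool" where "ncst e \<longleftrightarrow> e {} \<noteq> e {1}"

lemma pequiv_filter_gen:
  "is_path N u w (ps @ qs) \<Longrightarrow> (ps @ qs, ps @ filter ncst qs) \<in> pequiv N u w \<and> is_path N u w (ps @ filter ncst qs)"
proof (induction qs arbitrary: ps)
  case Nil then show ?case by (simp add: pequiv_def)
next
  case (Cons q qs)
  show ?case
  proof (cases "ncst q")
    case True
    then show ?thesis using Cons.IH[of "ps @ [q]"] Cons.prems by simp
  next
    case False
    have qc: "cmor 1 N q" using Cons.prems by (auto simp: is_path_append is_path_Cons)
    then have qe: "q = rest 1 (\<lambda>_. q {})" using const_edge False ncst_def by blast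
    have P: "is_path N u w (ps @ [rest 1 (\<lambda>_. q {})] @ qs)" using Cons.prems qe by simp
    note R = pequiv_remove[OF P]
    from Cons.IH[OF R(2)] R(1) qe False show ?thesis
      unfolding pequiv_def by (metis (no_types, lifting) append_Cons append_Nil filter.simps(2) rtrancl_trans)
  qed
qed

lemma pequiv_filter: "is_path N u w es \<Longrightarrow> (es, filter ncst es) \<in> pequiv N u w \<and> is_path N u w (filter ncst es)"
  using pequiv_filter_gen[of N u w "[]" es] by simp

lemma all_edges_uw:
  assumes p: "is_path N u w es" and a: "\<forall>e\<in>set es. e {} = u \<and> e {1} = w" and d: "u \<noteq> w"
  shows "es = [edge u w]"
proof (cases es)
  case Nil then show ?thesis using p d by simp
next
  case (Cons x xs)
  have x: "cmor 1 N x" "is_path N w w xs" using p a Cons by (auto simp: is_path_Cons)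
  have "xs = []"
  proof (cases xs)
    case (Cons y ys) then show ?thesis using x(2) a d \<open>es = x # xs\<close> by (auto simp: is_path_Cons)
  qed simp
  then show ?thesis using Cons cmor1_edge[OF x(1)] a by auto
qed

lemma path_canon:
  assumes p: "is_path N u w es" and a: "\<forall>e\<in>set es. e {} = e {1} \<or> (e {} = u \<and> e {1} = w)"
  shows "(es, if u = w then [] else [edge u w]) \<in> pequiv N u w"
proof -
  note F = conjunct1[OF pequiv_filter[OF p]] conjunct2[OF pequiv_filter[OF p]]
  have a2: "\<forall>e\<in>set (filter ncst es). e {} = u \<and> e {1} = w \<and> u \<noteq> w" using a by (auto simp: ncst_def)
  show ?thesis
  proof (cases "u = w")
    case True
    then have "filter ncst es = []" using a2 by (auto simp: filter_empty_conv)
    then show ?thesis using F True by simp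
  next
    case False
    then have "filter ncst es = [edge u w]" using all_edges_uw[OF F(2)] a2 by blast
    then show ?thesis using F False by simp
  qed
qed

lemma rest1_const_comp: "rest 1 (g \<circ> rest 1 (\<lambda>_. v)) = rest 1 (\<lambda>_. g v)"
  by (auto simp: rest_def fun_eq_iff)

lemma face12_range: "A \<subseteq> {1..1} \<Longrightarrow> j \<in> {1, 2} \<Longrightarrow> face j d A \<subseteq> {1..2}"
  by (auto simp: face_def)

lemma rest1_face_comp: "j \<in> {1,2} \<Longrightarrow> rest 1 (g \<circ> rest 1 (s \<circ> face j d)) = rest 1 (rest 2 (g \<circ> s) \<circ> face j d)"
proof (rule ext)
  fix A assume j: "j \<in> {1,2}"
  show "rest 1 (g \<circ> rest 1 (s \<circ> face j d)) A = rest 1 (rest 2 (g \<circ> s) \<circ> face j d) A"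
    using face12_range[OF _ j, of A d] by (auto simp: rest_def)
qed

lemma pins_map: assumes g: "cmor N M g" and h: "(es, es') \<in> pins N u w"
  shows "(mp g es, mp g es') \<in> pins M (g u) (g w)"
proof -
  from h obtain ps qs v where e: "es = ps @ qs" "es' = ps @ [rest 1 (\<lambda>_. v)] @ qs"
    and p: "is_path N u w es" "is_path N u w es'" unfolding pins_def by blast
  have "mp g es' = mp g ps @ [rest 1 (\<lambda>_. g v)] @ mp g qs" using e by (simp add: rest1_const_comp)
  moreover have "mp g es = mp g ps @ mp g qs" using e by simp
  ultimately show ?thesis unfolding pins_def using path_map[OF g p(1)] path_map[OF g p(2)] by blast
qed

lemma pstep_map: assumes g: "cmor N M g" and h: "(es, es') \<in> pstep N u w"
  shows "(mp g es, mp g es') \<in> pstep M (g u) (g w)"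
proof -
  from h obtain ps qs s where s: "cmor 2 N s" and
     e: "es = ps @ [rest 1 (s \<circ> face 1 False), rest 1 (s \<circ> face 2 True)] @ qs"
        "es' = ps @ [rest 1 (s \<circ> face 2 False), rest 1 (s \<circ> face 1 True)] @ qs"
    and p: "is_path N u w es" "is_path N u w es'" unfolding pstep_def by blast
  define s' where "s' = rest 2 (g \<circ> s)"
  have s': "cmor 2 M s'" using cmor_comp[OF g s] s'_def by simp
  have "mp g es = mp g ps @ [rest 1 (s' \<circ> face 1 False), rest 1 (s' \<circ> face 2 True)] @ mp g qs"
    "mp g es' = mp g ps @ [rest 1 (s' \<circ> face 2 False), rest 1 (s' \<circ> face 1 True)] @ mp g qs"
    using e by (simp_all add: s'_def rest1_face_comp)
  then show ?thesis unfolding pstep_def using path_map[OF g p(1)] path_map[OF g p(2)] s' by blast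
qed

lemma pequiv_map: assumes g: "cmor N M g" and h: "(es, es') \<in> pequiv N u w"
  shows "(mp g es, mp g es') \<in> pequiv M (g u) (g w)"
  using h unfolding pequiv_def
proof (induction rule: rtrancl_induct)
  case base then show ?case by simp
next
  case (step y z)
  then have "(mp g y, mp g z) \<in> pins M (g u) (g w) \<union> (pins M (g u) (g w))\<inverse>"
    using pins_map[OF g] by blast
  then show ?case using step by (meson rtrancl.rtrancl_into_rtrancl)
qed

lemma pleq_map: assumes g: "cmor N M g" and h: "(es, es') \<in> pleq N u w"
  shows "(mp g es, mp g es') \<in> pleq M (g u) (g w)"
  using h unfolding pleq_def
proof (induction rule: rtrancl_induct)
  case base then show ?case by simp
next
  case (step y z)
  then have "(mp g y, mp g z) \<in> pequiv M (g u) (g w) \<union> pstep M (g u) (g w)"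
    using pequiv_map[OF g] pstep_map[OF g] by blast
  then show ?case using step by (meson rtrancl.rtrancl_into_rtrancl)
qed

lemma nsimp_map: "cmor N M g \<Longrightarrow> nsimp N u w k gs \<Longrightarrow> nsimp M (g u) (g w) k (map (mp g) gs)"
  unfolding nsimp_def using path_map pleq_map by auto


declare One_nat_def[simp del]

definition good :: "'a cset \<Rightarrow> bool" where
  "good S \<longleftrightarrow> (\<forall>k d. dvalid S k d \<longrightarrow> dsrc S d \<in> cells S 0 \<and> dtgt S d \<in> cells S 0)"

lemma cvalid_Nil[simp]: "cvalid S k a b [] \<longleftrightarrow> a = b \<and> a \<in> cells S 0"
  by (auto simp: cvalid_def)

lemma cvalid_Cons:
  assumes g: "good S"
  shows "cvalid S k a b (d # ds) \<longleftrightarrow> dvalid S k d \<and> dsrc S d = a \<and> cvalid S k (dtgt S d) b ds"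
proof (cases "ds = []")
  case True
  have "dvalid S k d \<Longrightarrow> dsrc S d \<in> cells S 0 \<and> dtgt S d \<in> cells S 0" using g unfolding good_def by blast
  then show ?thesis using True by (auto simp: cvalid_def)
next
  case False
  have idx: "(\<forall>j. Suc j < length (d # ds) \<longrightarrow> dtgt S ((d # ds) ! j) = dsrc S ((d # ds) ! Suc j)) \<longleftrightarrow>
     dtgt S d = dsrc S (hd ds) \<and> (\<forall>j. Suc j < length ds \<longrightarrow> dtgt S (ds ! j) = dsrc S (ds ! Suc j))"
  proof
    assume h: "\<forall>j. Suc j < length (d # ds) \<longrightarrow> dtgt S ((d # ds) ! j) = dsrc S ((d # ds) ! Suc j)"
    have "dtgt S d = dsrc S (hd ds)" using h[rule_format, of 0] False by (simp add: hd_conv_nth)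
    moreover have "\<forall>j. Suc j < length ds \<longrightarrow> dtgt S (ds ! j) = dsrc S (ds ! Suc j)"
      using h by (metis Suc_mono length_Cons nth_Cons_Suc)
    ultimately show "dtgt S d = dsrc S (hd ds) \<and> (\<forall>j. Suc j < length ds \<longrightarrow> dtgt S (ds ! j) = dsrc S (ds ! Suc j))" by blast
  next
    assume h: "dtgt S d = dsrc S (hd ds) \<and> (\<forall>j. Suc j < length ds \<longrightarrow> dtgt S (ds ! j) = dsrc S (ds ! Suc j))"
    show "\<forall>j. Suc j < length (d # ds) \<longrightarrow> dtgt S ((d # ds) ! j) = dsrc S ((d # ds) ! Suc j)"
    proof (intro allI impI)
      fix j assume "Suc j < length (d # ds)"
      then show "dtgt S ((d # ds) ! j) = dsrc S ((d # ds) ! Suc j)"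
        using h False by (cases j) (auto simp: hd_conv_nth)
    qed
  qed
  have "dvalid S k d \<Longrightarrow> dsrc S d \<in> cells S 0 \<and> dtgt S d \<in> cells S 0" using g unfolding good_def by blast
  then show ?thesis
    using False unfolding cvalid_def idx by (auto simp: last.simps)
qed

lemma cvalid_cells: "cvalid S k a b X \<Longrightarrow> a \<in> cells S 0 \<and> b \<in> cells S 0"
  by (simp add: cvalid_def)

lemma cvalid_append:
  assumes g: "good S"
  shows "cvalid S k a b (X @ Y) \<longleftrightarrow> (\<exists>c. cvalid S k a c X \<and> cvalid S k c b Y)"
proof (induction X arbitrary: a)
  case Nil
  show ?case
  proof
    assume "cvalid S k a b ([] @ Y)"
    then have "cvalid S k a a [] \<and> cvalid S k a b Y" using cvalid_cells[of S k a b Y] by simp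
    then show "\<exists>c. cvalid S k a c [] \<and> cvalid S k c b Y" by blast
  next
    assume "\<exists>c. cvalid S k a c [] \<and> cvalid S k c b Y"
    then show "cvalid S k a b ([] @ Y)" by auto
  qed
next
  case (Cons d X)
  have "cvalid S k a b ((d # X) @ Y) \<longleftrightarrow> dvalid S k d \<and> dsrc S d = a \<and> cvalid S k (dtgt S d) b (X @ Y)"
    using cvalid_Cons[OF g] by simp
  also have "\<dots> \<longleftrightarrow> dvalid S k d \<and> dsrc S d = a \<and> (\<exists>c. cvalid S k (dtgt S d) c X \<and> cvalid S k c b Y)"
    using Cons.IH by simp
  also have "\<dots> \<longleftrightarrow> (\<exists>c. cvalid S k a c (d # X) \<and> cvalid S k c b Y)"
    by (simp add: cvalid_Cons[OF g])
  finally show ?case .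
qed

lemma cvalid_ends: "cvalid S k a b X \<Longrightarrow> X \<noteq> [] \<Longrightarrow> a = dsrc S (hd X) \<and> b = dtgt S (last X)"
  by (simp add: cvalid_def)

lemma ceq_refl[simp]: "(x, x) \<in> ceq S k" by (simp add: ceq_def)

lemma ceq_sym: "(x, y) \<in> ceq S k \<Longrightarrow> (y, x) \<in> ceq S k"
proof -
  assume "(x, y) \<in> ceq S k"
  then have "(y, x) \<in> ((crel S k \<union> (crel S k)\<inverse>)\<inverse>)\<^sup>*"
    unfolding ceq_def by (rule rtrancl_converseI)
  moreover have "(crel S k \<union> (crel S k)\<inverse>)\<inverse> = crel S k \<union> (crel S k)\<inverse>" by auto
  ultimately show ?thesis unfolding ceq_def by simp
qed

lemma ceq_trans: "(x, y) \<in> ceq S k \<Longrightarrow> (y, z) \<in> ceq S k \<Longrightarrow> (x, z) \<in> ceq S k"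
  unfolding ceq_def by (rule rtrancl_trans)

lemma ceq_equiv: "equiv UNIV (ceq S k)"
  by (rule equivI) (auto simp: refl_on_def sym_def trans_def intro: ceq_sym ceq_trans)

lemma ceq_class_eq: "ceq S k `` {x} = ceq S k `` {y} \<longleftrightarrow> (x, y) \<in> ceq S k"
proof
  assume "ceq S k `` {x} = ceq S k `` {y}"
  moreover have "y \<in> ceq S k `` {y}" by simp
  ultimately have "y \<in> ceq S k `` {x}" by simp
  then show "(x, y) \<in> ceq S k" by simp
next
  assume h: "(x, y) \<in> ceq S k"
  show "ceq S k `` {x} = ceq S k `` {y}"
    using h ceq_sym[OF h] by (auto intro: ceq_trans)
qed

lemma ceq_class_mem: "y \<in> ceq S k `` {x} \<longleftrightarrow> (x, y) \<in> ceq S k" by simp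

lemma crel_ceq: "(l, r) \<in> basic S k \<Longrightarrow> cvalid S k a b (P @ l @ Q) \<Longrightarrow> cvalid S k a b (P @ r @ Q)
   \<Longrightarrow> (P @ l @ Q, P @ r @ Q) \<in> ceq S k"
  unfolding ceq_def crel_def by blast

definition lrel :: "'a cset \<Rightarrow> nat \<Rightarrow> 'a \<Rightarrow> 'a \<Rightarrow> 'a datum list \<Rightarrow> 'a datum list \<Rightarrow> bool" where
  "lrel S k c d X Y \<longleftrightarrow> cvalid S k c d X \<and> cvalid S k c d Y \<and>
     (\<forall>P Q a b. cvalid S k a c P \<longrightarrow> cvalid S k d b Q \<longrightarrow> (P @ X @ Q, P @ Y @ Q) \<in> ceq S k)"

lemma lrel_refl: "cvalid S k c d X \<Longrightarrow> lrel S k c d X X"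
  by (simp add: lrel_def)

lemma lrel_sym: "lrel S k c d X Y \<Longrightarrow> lrel S k c d Y X"
  by (auto simp: lrel_def intro: ceq_sym)

lemma lrel_trans: "lrel S k c d X Y \<Longrightarrow> lrel S k c d Y Z \<Longrightarrow> lrel S k c d X Z"
  unfolding lrel_def by (meson ceq_trans)

lemma lrel_basic:
  assumes g: "good S" and b: "(l, r) \<in> basic S k" and v: "cvalid S k c d l" "cvalid S k c d r"
  shows "lrel S k c d l r"
  unfolding lrel_def
proof (intro conjI allI impI)
  fix P Q a b assume "cvalid S k a c P" "cvalid S k d b Q"
  then have "cvalid S k a b (P @ l @ Q)" "cvalid S k a b (P @ r @ Q)"
    using v by (auto simp: cvalid_append[OF g])
  then show "(P @ l @ Q, P @ r @ Q) \<in> ceq S k" using crel_ceq[OF b] by blast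
qed (use v in auto)

lemma lrel_app_right:
  assumes g: "good S" and h: "lrel S k c d X Y" and z: "cvalid S k d e Z"
  shows "lrel S k c e (X @ Z) (Y @ Z)"
  unfolding lrel_def
proof (intro conjI allI impI)
  show "cvalid S k c e (X @ Z)" "cvalid S k c e (Y @ Z)"
    using h z by (auto simp: lrel_def cvalid_append[OF g])
  fix P Q a b assume p: "cvalid S k a c P" and q: "cvalid S k e b Q"
  have "cvalid S k d b (Z @ Q)" using z q by (auto simp: cvalid_append[OF g])
  moreover have H: "\<And>P Q a b. cvalid S k a c P \<Longrightarrow> cvalid S k d b Q \<Longrightarrow> (P @ X @ Q, P @ Y @ Q) \<in> ceq S k"
    using h unfolding lrel_def by blast
  ultimately show "(P @ (X @ Z) @ Q, P @ (Y @ Z) @ Q) \<in> ceq S k"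
    using H[OF p] by simp
qed

lemma lrel_app_left:
  assumes g: "good S" and z: "cvalid S k e c Z" and h: "lrel S k c d X Y"
  shows "lrel S k e d (Z @ X) (Z @ Y)"
  unfolding lrel_def
proof (intro conjI allI impI)
  show "cvalid S k e d (Z @ X)" "cvalid S k e d (Z @ Y)"
    using h z by (auto simp: lrel_def cvalid_append[OF g])
  fix P Q a b assume p: "cvalid S k a e P" and q: "cvalid S k d b Q"
  have "cvalid S k a c (P @ Z)" using z p by (auto simp: cvalid_append[OF g])
  moreover have H: "\<And>P Q a b. cvalid S k a c P \<Longrightarrow> cvalid S k d b Q \<Longrightarrow> (P @ X @ Q, P @ Y @ Q) \<in> ceq S k"
    using h unfolding lrel_def by blast
  ultimately show "(P @ (Z @ X) @ Q, P @ (Z @ Y) @ Q) \<in> ceq S k"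
    using H[OF _ q, of a "P @ Z"] by simp
qed

lemma lrel_ceq: "lrel S k c d X Y \<Longrightarrow> (X, Y) \<in> ceq S k"
  unfolding lrel_def
  by (metis append.left_neutral append.right_neutral cvalid_Nil cvalid_cells)

lemma crel_cases:
  assumes "(Z, Z') \<in> crel S k"
  obtains D l r E where "Z = D @ l @ E" "Z' = D @ r @ E" "(l, r) \<in> basic S k"
  using assms unfolding crel_def by blast

lemma crel_valid:
  assumes "(Z, Z') \<in> crel S k \<or> (Z', Z) \<in> crel S k" "cvalid S k a b Z" "a \<noteq> b"
  shows "cvalid S k a b Z'"
proof -
  from assms(1) obtain a' b' where v: "cvalid S k a' b' Z" "cvalid S k a' b' Z'"
    unfolding crel_def by blast
  have ne: "Z \<noteq> []" using assms(2,3) by auto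
  then have "a' = a" "b' = b" using cvalid_ends[OF v(1) ne] cvalid_ends[OF assms(2) ne] by auto
  then show ?thesis using v by simp
qed

lemma ceq_invariant:
  assumes "(X, Y) \<in> ceq S k" "cvalid S k a b X" "a \<noteq> b"
    and st: "\<And>Z Z'. cvalid S k a b Z \<Longrightarrow> cvalid S k a b Z' \<Longrightarrow> (Z, Z') \<in> crel S k \<Longrightarrow>
        (F Z, F Z') \<in> R \<and> (F Z', F Z) \<in> R"
  shows "(F X, F Y) \<in> R\<^sup>* \<and> cvalid S k a b Y"
  using assms(1) unfolding ceq_def
proof (induction rule: rtrancl_induct)
  case base then show ?case using assms(2) by simp
next
  case (step y z)
  then have vy: "cvalid S k a b y" by blast
  have vz: "cvalid S k a b z" using crel_valid[OF _ vy assms(3)] step(2) by blast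
  have "(F y, F z) \<in> R" using step(2) st[OF vy vz] st[OF vz vy] by blast
  then show ?case using step vz by (meson rtrancl.rtrancl_into_rtrancl)
qed


declare One_nat_def[simp del]

lemma pequiv_path: "(es, es') \<in> pequiv N u w \<Longrightarrow> is_path N u w es \<Longrightarrow> is_path N u w es'"
  unfolding pequiv_def
proof (induction rule: rtrancl_induct)
  case base then show ?case .
next
  case (step y z) then show ?case unfolding pins_def by blast
qed

lemma vert_vtx: "vert S N x u = act S 0 N (vtx u) x"
  by (simp add: vert_def vtx_def)

lemma edge01: "edge {} {1} = rest 1 id"
  by (auto simp: edge_def rest_def fun_eq_iff)

lemma cmor_edge01: "cmor 1 1 (edge {} {1})"
  using cmor.cid[of 1] edge01 by simp

lemma edge_comp: "cmor 1 M E \<Longrightarrow> cmor M K F \<Longrightarrow> rest 1 (F \<circ> E) = edge (F (E {})) (F (E {1}))"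
  using cmor1_edge[OF cmor_comp] by (metis rest1_comp_vals)

lemma rest_comp_edge01: "cmor 1 M E \<Longrightarrow> rest 1 (E \<circ> edge {} {1}) = E"
  using edge_comp[OF cmor_edge01, of M E] cmor1_edge[of M E] by simp

lemma nsimp_path: "nsimp N u w k gs \<Longrightarrow> g \<in> set gs \<Longrightarrow> is_path N u w g"
  by (simp add: nsimp_def)

lemma nsimp_sub: "nsimp N u w k gs \<Longrightarrow> u \<subseteq> {1..N} \<and> w \<subseteq> {1..N} \<and> u \<subseteq> w"
proof -
  assume h: "nsimp N u w k gs"
  then have "gs \<noteq> []" by (auto simp: nsimp_def)
  then obtain g where "g \<in> set gs" by (cases gs) auto
  then have p: "is_path N u w g" using h nsimp_path by blast
  have "u \<subseteq> {1..N} \<and> w \<subseteq> {1..N}" using is_path_sub[OF p] .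
  moreover have "u \<subseteq> w" using is_path_mono[OF p] by (rule conjunct1)
  ultimately show ?thesis by simp
qed

lemma nsimp_replicate: "is_path N u w p \<Longrightarrow> nsimp N u w k (replicate (Suc k) p)"
  unfolding nsimp_def pleq_def by (auto simp del: replicate_Suc simp add: nth_replicate)

lemma nsimp_pequiv:
  assumes "nsimp N u w k gs" "\<forall>g\<in>set gs. (g, p) \<in> pequiv N u w"
  shows "list_all2 (\<lambda>g g'. (g, g') \<in> pequiv N u w) gs (replicate (Suc k) p)"
    "nsimp N u w k (replicate (Suc k) p)"
proof -
  have l: "length gs = Suc k" using assms by (simp add: nsimp_def)
  then show "list_all2 (\<lambda>g g'. (g, g') \<in> pequiv N u w) gs (replicate (Suc k) p)"
    using assms(2) by (auto simp del: replicate_Suc simp add: list_all2_conv_all_nth nth_replicate)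
  obtain g where "g \<in> set gs" using l by (cases gs) auto
  then have "is_path N u w p" using assms pequiv_path nsimp_path by blast
  then show "nsimp N u w k (replicate (Suc k) p)" by (rule nsimp_replicate)
qed

lemma basic_I1: "list_all2 (\<lambda>g g'. (g, g') \<in> pequiv N u w) gs gs' \<Longrightarrow>
   ([(N, x, u, w, gs)], [(N, x, u, w, gs')]) \<in> basic S k"
  unfolding basic_def by (intro UnI1) blast

lemma basic_I2: "cmor M N f \<Longrightarrow> x \<in> cells S N \<Longrightarrow>
   ([(M, act S M N f x, u, w, gs)], [(N, x, f u, f w, map (map (\<lambda>e. rest 1 (f \<circ> e))) gs)]) \<in> basic S k"
  unfolding basic_def apply (rule UnI1, rule UnI1, rule UnI2) by blast

lemma basic_I3: "([(N, x, u, v, gs), (N, x, v, w, hs)], [(N, x, u, w, map2 (@) gs hs)]) \<in> basic S k"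
  unfolding basic_def apply (rule UnI1, rule UnI2) by blast

lemma basic_I4: "([(N, x, u, u, replicate (Suc k) [])], []) \<in> basic S k"
  unfolding basic_def apply (rule UnI2) by blast

locale cub =
  fixes S :: "vmap cset" and n i :: nat and e :: bool
  assumes n2: "2 \<le> n" and i1: "1 \<le> i" and iN: "i \<le> n"
  and cells_cmor: "x \<in> cells S m \<Longrightarrow> cmor m n x"
  and actS: "act S = (\<lambda>m m' f x. rest m (x \<circ> f))"
  and closed: "x \<in> cells S N \<Longrightarrow> cmor M N f \<Longrightarrow> rest M (x \<circ> f) \<in> cells S M"
  and crit_in: "crit n i e \<in> cells S 1"
  and vtx_in: "v \<subseteq> {1..n} \<Longrightarrow> vtx v \<in> cells S 0"
  and factor: "y \<in> cells S N \<Longrightarrow> \<exists>M F g. F \<in> cells S M \<and> cmor N M g \<and> y = rest N (F \<circ> g) \<and> inj_on F (Pow {1..M})"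
begin

definition P0 :: "nat set" where "P0 = (if e then {} else {1..n} - {i})"
definition P1 :: "nat set" where "P1 = (if e then {i} else {1..n})"
definition cd :: "nat \<Rightarrow> vmap datum" where
  "cd k = (1, crit n i e, {}, {1}, replicate (Suc k) [edge {} {1}])"

lemma crit_edge: "crit n i e = edge P0 P1"
  by (auto simp: crit_def edge_def P0_def P1_def)

lemma P01: "P0 \<subseteq> {1..n}" "P1 = insert i P0" "i \<notin> P0" "P1 \<subseteq> {1..n}" "P0 \<noteq> P1"
proof -
  show "P0 \<subseteq> {1..n}" by (auto simp: P0_def)
  show "P1 = insert i P0" unfolding P0_def P1_def using i1 iN by (cases e) auto
  show "i \<notin> P0" by (auto simp: P0_def)
  show "P1 \<subseteq> {1..n}" using i1 iN by (auto simp: P1_def)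
  then show "P0 \<noteq> P1" using \<open>P1 = insert i P0\<close> \<open>i \<notin> P0\<close> by auto
qed

lemma between_P: "P0 \<subseteq> v \<Longrightarrow> v \<subseteq> P1 \<Longrightarrow> v = P0 \<or> v = P1"
  using P01 by auto

lemma act_S[simp]: "act S m m' f x = rest m (x \<circ> f)"
  by (simp add: actS)

lemma vert_S: "vert S N x u = vtx (x u)"
  by (auto simp: vert_def vtx_def rest_def fun_eq_iff)

lemma good_S: "good S"
  unfolding good_def
proof (intro allI impI)
  fix k and d :: "vmap datum"
  assume h: "dvalid S k d"
  obtain N x u w gs where d: "d = (N, x, u, w, gs)" by (cases d) auto
  have x: "x \<in> cells S N" and ns: "nsimp N u w k gs" using h d by auto
  have "rest 0 (x \<circ> vtx u) \<in> cells S 0" "rest 0 (x \<circ> vtx w) \<in> cells S 0"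
    using closed[OF x vtx_cmor] nsimp_sub[OF ns] by auto
  then show "dsrc S d \<in> cells S 0 \<and> dtgt S d \<in> cells S 0"
    using d by (simp add: vert_vtx)
qed

declare vert_S[simp]

lemma good_S': "dvalid S k d \<Longrightarrow> dsrc S d \<in> cells S 0 \<and> dtgt S d \<in> cells S 0"
  using good_S unfolding good_def by blast

lemma dsrc_S[simp]: "dsrc S (N, x, u, w, gs) = vtx (x u)" by (simp add: vert_S)
lemma dtgt_S[simp]: "dtgt S (N, x, u, w, gs) = vtx (x w)" by (simp add: vert_S)

lemma cvalid1: "cvalid S k c d [x] \<longleftrightarrow> dvalid S k x \<and> dsrc S x = c \<and> dtgt S x = d"
  by (auto simp: cvalid_Cons[OF good_S] dest: good_S')

lemma cd_valid: "dvalid S k (cd k)" "dsrc S (cd k) = vtx P0" "dtgt S (cd k) = vtx P1"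
proof -
  have "is_path 1 {} {1} [edge {} {1}]" using cmor_edge01 by (simp add: is_path_Cons)
  then show "dvalid S k (cd k)" using crit_in by (simp add: cd_def nsimp_replicate del: replicate_Suc)
  show "dsrc S (cd k) = vtx P0" "dtgt S (cd k) = vtx P1" by (simp_all add: cd_def crit_edge)
qed

lemma triv_common:
  assumes dv: "dvalid S k (N, y, u, v, gs)"
  obtains M F g where "F \<in> cells S M" "cmor N M g" "inj_on F (Pow {1..M})" "cmor M n F"
    "lrel S k (vtx (y u)) (vtx (y v)) [(N, y, u, v, gs)] [(M, F, g u, g v, map (mp g) gs)]"
    "nsimp M (g u) (g v) k (map (mp g) gs)" "y u = F (g u)" "y v = F (g v)"
    "g u \<subseteq> {1..M}" "g v \<subseteq> {1..M}" "g u \<subseteq> g v"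
proof -
  have y: "y \<in> cells S N" and ns: "nsimp N u v k gs" using dv by auto
  obtain M F g where F: "F \<in> cells S M" and g: "cmor N M g" and yF: "y = rest N (F \<circ> g)"
    and inj: "inj_on F (Pow {1..M})" using factor[OF y] by blast
  note uv = nsimp_sub[OF ns]
  have yu: "y u = F (g u)" "y v = F (g v)" using uv yF by (auto simp: rest_def)
  have ns2: "nsimp M (g u) (g v) k (map (mp g) gs)" using nsimp_map[OF g ns] .
  have b: "([(N, act S N M g F, u, v, gs)], [(M, F, g u, g v, map (map (\<lambda>e. rest 1 (g \<circ> e))) gs)]) \<in> basic S k"
    by (rule basic_I2[OF g F])
  have b2: "([(N, y, u, v, gs)], [(M, F, g u, g v, map (mp g) gs)]) \<in> basic S k"
    using b yF by (simp add: mp_def[abs_def])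
  have l: "lrel S k (vtx (y u)) (vtx (y v)) [(N, y, u, v, gs)] [(M, F, g u, g v, map (mp g) gs)]"
    apply (rule lrel_basic[OF good_S b2])
    using dv F ns2 yu by (simp_all add: cvalid1)
  show ?thesis
    apply (rule that[OF F g inj cells_cmor[OF F] l ns2 yu])
    using cmor_range[OF g] cmor_mono[OF g] uv by auto
qed

lemma triv_eq:
  assumes dv: "dvalid S k (N, y, u, v, gs)" and eq: "y u = y v"
  shows "lrel S k (vtx (y u)) (vtx (y v)) [(N, y, u, v, gs)] []"
proof -
  obtain M F g where F: "F \<in> cells S M" "cmor N M g" "inj_on F (Pow {1..M})" "cmor M n F"
    and l1: "lrel S k (vtx (y u)) (vtx (y v)) [(N, y, u, v, gs)] [(M, F, g u, g v, map (mp g) gs)]"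
    and ns2: "nsimp M (g u) (g v) k (map (mp g) gs)" and yu: "y u = F (g u)" "y v = F (g v)"
    and sub: "g u \<subseteq> {1..M}" "g v \<subseteq> {1..M}" "g u \<subseteq> g v"
    by (rule triv_common[OF dv])
  have c: "g u = g v" using F(3) sub yu eq by (auto dest: inj_onD)
  have pe: "\<forall>p\<in>set (map (mp g) gs). (p, []) \<in> pequiv M (g u) (g v)"
  proof
    fix p assume p: "p \<in> set (map (mp g) gs)"
    then have pp: "is_path M (g u) (g v) p" using ns2 nsimp_path by blast
    have "\<forall>e\<in>set p. e {} = e {1} \<or> (e {} = g u \<and> e {1} = g v)"
      using is_path_mono[OF pp] c by auto
    then show "(p, []) \<in> pequiv M (g u) (g v)" using path_canon[OF pp] c by simp
  qed
  note NP = nsimp_pequiv[OF ns2 pe]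
  have b: "([(M, F, g u, g v, map (mp g) gs)], [(M, F, g u, g v, replicate (Suc k) [])]) \<in> basic S k"
    by (rule basic_I1[OF NP(1)])
  have l2: "lrel S k (vtx (y u)) (vtx (y v)) [(M, F, g u, g v, map (mp g) gs)] [(M, F, g u, g v, replicate (Suc k) [])]"
    apply (rule lrel_basic[OF good_S b])
    using l1 NP(2) F yu unfolding lrel_def by (auto simp: cvalid1)
  have b3: "([(M, F, g u, g u, replicate (Suc k) [])], []) \<in> basic S k"
    by (rule basic_I4)
  have "cvalid S k (vtx (y u)) (vtx (y v)) [(N, y, u, v, gs)]" using l1 unfolding lrel_def by blast
  then have vc: "vtx (y u) \<in> cells S 0" by (rule cvalid_cells[THEN conjunct1])
  have l3: "lrel S k (vtx (y u)) (vtx (y v)) [(M, F, g u, g v, replicate (Suc k) [])] []"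
    apply (rule lrel_basic[OF good_S])
    using b3 c apply simp
    using l2 c vc eq unfolding lrel_def by auto
  show ?thesis using lrel_trans[OF lrel_trans[OF l1 l2] l3] .
qed

lemma triv_crit:
  assumes dv: "dvalid S k (N, y, u, v, gs)" and eq: "y u = P0" "y v = P1"
  shows "lrel S k (vtx P0) (vtx P1) [(N, y, u, v, gs)] [cd k]"
proof -
  obtain M F g where F: "F \<in> cells S M" "cmor N M g" "inj_on F (Pow {1..M})" "cmor M n F"
    and l1: "lrel S k (vtx (y u)) (vtx (y v)) [(N, y, u, v, gs)] [(M, F, g u, g v, map (mp g) gs)]"
    and ns2: "nsimp M (g u) (g v) k (map (mp g) gs)" and yu: "y u = F (g u)" "y v = F (g v)"
    and sub: "g u \<subseteq> {1..M}" "g v \<subseteq> {1..M}" "g u \<subseteq> g v"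
    by (rule triv_common[OF dv])
  define c0 where "c0 = g u"
  define c1 where "c1 = g v"
  have ne: "c0 \<noteq> c1" using yu eq P01(5) by (auto simp: c0_def c1_def)
  have mid: "w = c0 \<or> w = c1" if "c0 \<subseteq> w" "w \<subseteq> c1" for w
  proof -
    have "F c0 \<subseteq> F w" "F w \<subseteq> F c1" using cmor_mono[OF F(4)] that sub by (auto simp: c0_def c1_def)
    then have "F w = F c0 \<or> F w = F c1" using between_P yu eq by (auto simp: c0_def c1_def)
    moreover have "w \<in> Pow {1..M}" "c0 \<in> Pow {1..M}" "c1 \<in> Pow {1..M}"
      using that sub by (auto simp: c0_def c1_def)
    ultimately show ?thesis using F(3) by (auto dest: inj_onD)
  qed
  define E where "E = edge c0 c1"
  have pe: "\<forall>p\<in>set (map (mp g) gs). (p, [E]) \<in> pequiv M c0 c1"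
  proof
    fix p assume p: "p \<in> set (map (mp g) gs)"
    then have pp: "is_path M c0 c1 p" using ns2 nsimp_path c0_def c1_def by blast
    have "\<forall>e\<in>set p. e {} = e {1} \<or> (e {} = c0 \<and> e {1} = c1)"
    proof
      fix x assume "x \<in> set p"
      then have x: "c0 \<subseteq> x {}" "x {} \<subseteq> x {1}" "x {1} \<subseteq> c1" using is_path_mono[OF pp] by auto
      have "x {} = c0 \<or> x {} = c1" "x {1} = c0 \<or> x {1} = c1" using mid x by (meson order_trans)+
      then show "x {} = x {1} \<or> (x {} = c0 \<and> x {1} = c1)" using x by auto
    qed
    then show "(p, [E]) \<in> pequiv M c0 c1" using path_canon[OF pp] ne E_def by simp
  qed
  note NP = nsimp_pequiv[OF ns2[folded c0_def c1_def] pe]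
  have Ep: "is_path M c0 c1 [E]" using NP(2) nsimp_path by fastforce
  then have Ec: "cmor 1 M E" by (simp add: is_path_Cons)
  have b: "([(M, F, c0, c1, map (mp g) gs)], [(M, F, c0, c1, replicate (Suc k) [E])]) \<in> basic S k"
    by (rule basic_I1[OF NP(1)])
  have l2: "lrel S k (vtx P0) (vtx P1) [(M, F, c0, c1, map (mp g) gs)] [(M, F, c0, c1, replicate (Suc k) [E])]"
    apply (rule lrel_basic[OF good_S b])
    using l1 NP(2) F yu eq unfolding lrel_def by (auto simp: cvalid1 c0_def c1_def)
  have actE: "act S 1 M E F = crit n i e"
    using edge_comp[OF Ec F(4)] yu eq by (simp add: E_def crit_edge c0_def c1_def)
  have mpE: "map (map (\<lambda>x. rest 1 (E \<circ> x))) (replicate (Suc k) [edge {} {1}]) = replicate (Suc k) [E]"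
    using rest_comp_edge01[OF Ec] by simp
  have b3: "([(1, act S 1 M E F, {}, {1}, replicate (Suc k) [edge {} {1}])],
             [(M, F, E {}, E {1}, map (map (\<lambda>x. rest 1 (E \<circ> x))) (replicate (Suc k) [edge {} {1}]))]) \<in> basic S k"
    by (rule basic_I2[OF Ec F(1)])
  then have b3': "([cd k], [(M, F, c0, c1, replicate (Suc k) [E])]) \<in> basic S k"
    unfolding actE mpE by (simp add: cd_def E_def)
  have l3: "lrel S k (vtx P0) (vtx P1) [cd k] [(M, F, c0, c1, replicate (Suc k) [E])]"
    apply (rule lrel_basic[OF good_S b3'])
    using cd_valid l2 unfolding lrel_def by (auto simp: cvalid1)
  have l1': "lrel S k (vtx P0) (vtx P1) [(N, y, u, v, gs)] [(M, F, c0, c1, map (mp g) gs)]"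
    using l1 eq by (simp add: c0_def c1_def)
  show ?thesis using lrel_trans[OF lrel_trans[OF l1' l2] lrel_sym[OF l3]] .
qed

end


declare One_nat_def[simp del]

definition rep :: "'a set \<Rightarrow> 'a" where "rep X = (SOME x. x \<in> X)"

lemma rep_single[simp]: "rep {y} = y" by (simp add: rep_def)
lemma rep_in: "X \<noteq> {} \<Longrightarrow> rep X \<in> X" unfolding rep_def by (simp add: some_in_eq)

lemma cells_quot: "cells (quot S C) m = qcls (C m) ` cells S m"
  by (simp add: cells_def quot_def)
lemma act_quot: "act (quot S C) m m' f X = qcls (C m) (act S m m' f (rep X))"
  by (simp add: act_def quot_def rep_def)

context cub begin

abbreviation CC :: "nat \<Rightarrow> vmap set" where "CC \<equiv> collapsed n i e"
abbreviation H :: "vmap set cset" where "H \<equiv> quot S CC"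
abbreviation pt :: "vmap set" where "pt \<equiv> CC 0"

lemma cells_H: "cells H m = qcls (CC m) ` cells S m" by (rule cells_quot)
lemma act_H: "act H m m' f X = qcls (CC m) (rest m (rep X \<circ> f))" by (simp add: act_quot)

lemma C_closed: assumes c: "c \<in> CC N" and f: "cmor M N f" shows "rest M (c \<circ> f) \<in> CC M"
proof -
  obtain y where y: "cmor N 1 y" "c = rest N (crit n i e \<circ> y)" using c by (auto simp: collapsed_def)
  have "rest M (c \<circ> f) = rest M (crit n i e \<circ> rest M (y \<circ> f))"
    using cmor_range[OF f] y(2) by (auto simp: rest_def fun_eq_iff)
  then show ?thesis using cmor_comp[OF y(1) f] by (auto simp: collapsed_def)
qed

lemma C_sub: "CC m \<subseteq> cells S m"
  using closed[OF crit_in] by (auto simp: collapsed_def)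

lemma C_ne: "rest m (crit n i e \<circ> rest m (\<lambda>_. {})) \<in> CC m"
  using cmor_const[of "{}" 1 m] by (auto simp: collapsed_def)

lemma C_nonempty: "CC m \<noteq> {}" using C_ne by blast

lemma rep_C: "rep (CC m) \<in> CC m" using rep_in[OF C_nonempty] .

lemma C_vals: assumes c: "c \<in> CC N" and u: "u \<subseteq> {1..N}" shows "c u = P0 \<or> c u = P1"
proof -
  obtain y where y: "cmor N 1 y" "c = rest N (crit n i e \<circ> y)" using c by (auto simp: collapsed_def)
  have "y u \<subseteq> {1..1}" using cmor_range[OF y(1) u] .
  then have "y u = {} \<or> y u = {1}" by auto
  then show ?thesis using y(2) u by (auto simp: rest_def crit_edge edge_def)
qed

lemma C_0: "pt = {vtx P0, vtx P1}"
proof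
  show "pt \<subseteq> {vtx P0, vtx P1}"
  proof
    fix c assume c: "c \<in> pt"
    then have "cmor 0 n c" using C_sub cells_cmor by blast
    then have "c = vtx (c {})" using cmor0_vtx by blast
    then show "c \<in> {vtx P0, vtx P1}" using C_vals[OF c, of "{}"] by auto
  qed
  have "vtx P0 = rest 0 (crit n i e \<circ> vtx {})" "vtx P1 = rest 0 (crit n i e \<circ> vtx {1})"
    by (auto simp: vtx_def rest_def crit_edge edge_def fun_eq_iff)
  moreover have "cmor 0 1 (vtx {})" "cmor 0 1 (vtx {1})" by (auto intro: vtx_cmor)
  ultimately show "{vtx P0, vtx P1} \<subseteq> pt" by (auto simp: collapsed_def)
qed

lemma cellH_cases:
  assumes "X \<in> cells H m"
  obtains "X = CC m" | y where "X = {y}" "y \<in> cells S m" "y \<notin> CC m"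
  using assms unfolding cells_H qcls_def by (auto split: if_splits)

lemma rep_cellH: "X \<in> cells H m \<Longrightarrow> rep X \<in> cells S m"
  by (metis C_sub cellH_cases rep_C rep_single subsetD)

lemma act_H_C: "cmor M N f \<Longrightarrow> act H M N f (CC N) = CC M"
  using C_closed[OF rep_C] by (simp add: act_H qcls_def)

lemma act_H_single: "act H M N f {y} = qcls (CC M) (rest M (y \<circ> f))"
  by (simp add: act_H)

lemma vert_H: "vert H N X u = qcls pt (vtx (rep X u))"
  by (auto simp: vert_def act_H vtx_def rest_def fun_eq_iff intro!: arg_cong[where f="qcls pt"])

lemma pt_cell: "pt \<in> cells H 0"
proof -
  have "vtx P0 \<in> cells S 0" using vtx_in P01 by blast
  moreover have "qcls pt (vtx P0) = pt" using C_0 by (simp add: qcls_def)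
  ultimately show ?thesis unfolding cells_H by force
qed

definition vq :: "nat set \<Rightarrow> vmap set" where "vq v = qcls pt (vtx v)"

lemma vq_pt: "v = P0 \<or> v = P1 \<Longrightarrow> vq v = pt"
  using C_0 by (auto simp: vq_def qcls_def)

lemma vq_real: "v \<noteq> P0 \<Longrightarrow> v \<noteq> P1 \<Longrightarrow> vq v = {vtx v}"
  using C_0 by (auto simp: vq_def qcls_def vtx_inj)

lemma vq_eq: "vq v = vq v' \<longleftrightarrow> v = v' \<or> ((v = P0 \<or> v = P1) \<and> (v' = P0 \<or> v' = P1))"
proof -
  have "pt \<noteq> {vtx v}" for v using C_0 P01(5) by (auto simp: vtx_inj)
  then show ?thesis
    by (cases "v = P0 \<or> v = P1"; cases "v' = P0 \<or> v' = P1") (auto simp: vq_pt vq_real vtx_inj)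
qed

lemma vert_H': "vert H N X u = vq (rep X u)"
  by (simp add: vert_H vq_def)

lemma good_H: "good H"
  unfolding good_def
proof (intro allI impI)
  fix k and d :: "vmap set datum"
  assume h: "dvalid H k d"
  obtain N x u w gs where d: "d = (N, x, u, w, gs)" by (cases d) auto
  have x: "x \<in> cells H N" and ns: "nsimp N u w k gs" using h d by auto
  have r: "rep x \<in> cells S N" using rep_cellH[OF x] .
  have "rest 0 (rep x \<circ> vtx u) \<in> cells S 0" "rest 0 (rep x \<circ> vtx w) \<in> cells S 0"
    using closed[OF r vtx_cmor] nsimp_sub[OF ns] by auto
  moreover have "rest 0 (rep x \<circ> vtx v) = vtx (rep x v)" for v
    by (auto simp: vtx_def rest_def fun_eq_iff)
  ultimately have "vtx (rep x u) \<in> cells S 0" "vtx (rep x w) \<in> cells S 0" by auto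
  then show "dsrc H d \<in> cells H 0 \<and> dtgt H d \<in> cells H 0"
    using d by (auto simp: vert_H cells_H)
qed

lemma good_H': "dvalid H k d \<Longrightarrow> dsrc H d \<in> cells H 0 \<and> dtgt H d \<in> cells H 0"
  using good_H unfolding good_def by blast

lemma dsrc_H[simp]: "dsrc H (N, x, u, w, gs) = vq (rep x u)" by (simp add: vert_H')
lemma dtgt_H[simp]: "dtgt H (N, x, u, w, gs) = vq (rep x w)" by (simp add: vert_H')

lemma cvalid1_H: "cvalid H k c d [x] \<longleftrightarrow> dvalid H k x \<and> dsrc H x = c \<and> dtgt H x = d"
  by (auto simp: cvalid_Cons[OF good_H] dest: good_H')

end


declare One_nat_def[simp del]

context cub begin

declare vert_H'[simp]

lemma canon_paths:
  assumes ns: "nsimp M c0 c1 k GS" and F: "cmor M n F" "inj_on F (Pow {1..M})"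
    and v: "F c0 = P0 \<or> F c0 = P1" "F c1 = P0 \<or> F c1 = P1"
  shows "c0 = c1 \<Longrightarrow> list_all2 (\<lambda>g g'. (g, g') \<in> pequiv M c0 c1) GS (replicate (Suc k) [])
            \<and> nsimp M c0 c1 k (replicate (Suc k) [])"
    and "c0 \<noteq> c1 \<Longrightarrow> list_all2 (\<lambda>g g'. (g, g') \<in> pequiv M c0 c1) GS (replicate (Suc k) [edge c0 c1])
            \<and> nsimp M c0 c1 k (replicate (Suc k) [edge c0 c1]) \<and> cmor 1 M (edge c0 c1)"
proof -
  have sub: "c0 \<subseteq> {1..M}" "c1 \<subseteq> {1..M}" "c0 \<subseteq> c1" using nsimp_sub[OF ns] by auto
  {
    assume c: "c0 = c1"
    have pe: "\<forall>p\<in>set GS. (p, []) \<in> pequiv M c0 c1"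
    proof
      fix p assume p: "p \<in> set GS"
      then have pp: "is_path M c0 c1 p" using ns nsimp_path by blast
      have "\<forall>e\<in>set p. e {} = e {1} \<or> (e {} = c0 \<and> e {1} = c1)"
        using is_path_mono[OF pp] c by auto
      then show "(p, []) \<in> pequiv M c0 c1" using path_canon[OF pp] c by simp
    qed
    note NP = nsimp_pequiv[OF ns pe]
    then show "list_all2 (\<lambda>g g'. (g, g') \<in> pequiv M c0 c1) GS (replicate (Suc k) [])
            \<and> nsimp M c0 c1 k (replicate (Suc k) [])" by blast
  }
  {
    assume ne: "c0 \<noteq> c1"
    have Fne: "F c0 \<noteq> F c1" using F(2) ne sub by (auto dest: inj_onD)
    have mid: "w = c0 \<or> w = c1" if "c0 \<subseteq> w" "w \<subseteq> c1" for w
    proof -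
      have w: "w \<subseteq> {1..M}" using that sub by auto
      have "F c0 \<subseteq> F w" using cmor_mono[OF F(1) that(1) w] .
      moreover have "F w \<subseteq> F c1" using cmor_mono[OF F(1) that(2) sub(2)] .
      moreover have "P0 \<subseteq> P1" using P01 by auto
      ultimately have fw: "P0 \<subseteq> F w" "F w \<subseteq> P1" using v by auto
      have "F w = P0 \<or> F w = P1" by (rule between_P[OF fw])
      then have "F w = F c0 \<or> F w = F c1" using v Fne by metis
      moreover have "w \<in> Pow {1..M}" "c0 \<in> Pow {1..M}" "c1 \<in> Pow {1..M}"
        using that sub by auto
      ultimately show ?thesis using F(2) by (auto dest: inj_onD)
    qed
    define E where "E = edge c0 c1"
    have pe: "\<forall>p\<in>set GS. (p, [E]) \<in> pequiv M c0 c1"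
    proof
      fix p assume p: "p \<in> set GS"
      then have pp: "is_path M c0 c1 p" using ns nsimp_path by blast
      have "\<forall>e\<in>set p. e {} = e {1} \<or> (e {} = c0 \<and> e {1} = c1)"
      proof
        fix x assume "x \<in> set p"
        then have x: "c0 \<subseteq> x {}" "x {} \<subseteq> x {1}" "x {1} \<subseteq> c1" using is_path_mono[OF pp] by auto
        have "x {} = c0 \<or> x {} = c1" "x {1} = c0 \<or> x {1} = c1" using mid x by (meson order_trans)+
        then show "x {} = x {1} \<or> (x {} = c0 \<and> x {1} = c1)" using x by auto
      qed
      then show "(p, [E]) \<in> pequiv M c0 c1" using path_canon[OF pp] ne E_def by simp
    qed
    note NP = nsimp_pequiv[OF ns pe]
    have Ep: "is_path M c0 c1 [E]" using NP(2) nsimp_path by fastforce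
    then have Ec: "cmor 1 M E" by (simp add: is_path_Cons)
    show "list_all2 (\<lambda>g g'. (g, g') \<in> pequiv M c0 c1) GS (replicate (Suc k) [edge c0 c1])
            \<and> nsimp M c0 c1 k (replicate (Suc k) [edge c0 c1]) \<and> cmor 1 M (edge c0 c1)"
      using NP Ec E_def by simp
  }
qed

lemma C_vq: "c \<in> CC N \<Longrightarrow> u \<subseteq> {1..N} \<Longrightarrow> vq (c u) = pt"
  by (rule vq_pt[OF C_vals])

lemma htriv_C:
  assumes dv: "dvalid H k (N, CC N, u, w, gs)"
  shows "lrel H k pt pt [(N, CC N, u, w, gs)] []"
proof -
  have ns: "nsimp N u w k gs" using dv by simp
  note sub = nsimp_sub[OF ns]
  define g0 where "g0 = rest N (\<lambda>_. ({} :: nat set))"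
  have g0: "cmor N 0 g0" unfolding g0_def by (rule cmor_const) simp
  have g0v: "g0 u = {}" "g0 w = {}" using sub by (auto simp: g0_def rest_def)
  have b: "([(N, act H N 0 g0 pt, u, w, gs)], [(0, pt, g0 u, g0 w, map (map (\<lambda>e. rest 1 (g0 \<circ> e))) gs)]) \<in> basic H k"
    by (rule basic_I2[OF g0 pt_cell])
  then have b': "([(N, CC N, u, w, gs)], [(0, pt, {}, {}, map (mp g0) gs)]) \<in> basic H k"
    using act_H_C[OF g0] g0v by (simp add: mp_def[abs_def])
  have ns2: "nsimp 0 {} {} k (map (mp g0) gs)" using nsimp_map[OF g0 ns] g0v by simp
  have e1: "vq (rep (CC N) u) = pt" "vq (rep (CC N) w) = pt" using C_vq[OF rep_C] sub by auto
  have e2: "vq (rep pt {}) = pt" using C_vq[OF rep_C, of "{}" 0] by simp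
  have l1: "lrel H k pt pt [(N, CC N, u, w, gs)] [(0, pt, {}, {}, map (mp g0) gs)]"
    apply (rule lrel_basic[OF good_H b'])
    using dv e1 e2 ns2 pt_cell by (auto simp: cvalid1_H)
  have pe: "\<forall>p\<in>set (map (mp g0) gs). (p, []) \<in> pequiv 0 {} {}"
  proof
    fix p assume p: "p \<in> set (map (mp g0) gs)"
    then have pp: "is_path 0 {} {} p" using ns2 nsimp_path by blast
    have "\<forall>e\<in>set p. e {} = e {1} \<or> (e {} = {} \<and> e {1} = {})"
      using is_path_mono[OF pp] by auto
    then show "(p, []) \<in> pequiv 0 {} {}" using path_canon[OF pp] by simp
  qed
  note NP = nsimp_pequiv[OF ns2 pe]
  have l2: "lrel H k pt pt [(0, pt, {}, {}, map (mp g0) gs)] [(0, pt, {}, {}, replicate (Suc k) [])]"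
    apply (rule lrel_basic[OF good_H basic_I1[OF NP(1)]])
    using NP(2) ns2 pt_cell e2 by (auto simp: cvalid1_H)
  have l3: "lrel H k pt pt [(0, pt, {}, {}, replicate (Suc k) [])] []"
    apply (rule lrel_basic[OF good_H basic_I4])
    using NP(2) pt_cell e2 by (auto simp: cvalid1_H)
  show ?thesis using lrel_trans[OF lrel_trans[OF l1 l2] l3] .
qed

lemma single_cell: "{y} \<in> cells H N \<Longrightarrow> y \<in> cells S N \<and> y \<notin> CC N"
proof -
  assume h: "{y} \<in> cells H N"
  then obtain z where z: "z \<in> cells S N" "{y} = qcls (CC N) z" unfolding cells_H by blast
  have ne: "CC N \<noteq> {y}"
  proof
    assume "CC N = {y}"
    then have "rest N (crit n i e \<circ> rest N (\<lambda>_. {})) = y" "rest N (crit n i e \<circ> rest N (\<lambda>_. {1})) = y"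
      using C_ne[of N] cmor_const[of "{1}" 1 N] by (auto simp: collapsed_def)
    then have "crit n i e {} = crit n i e {1}"
      by (metis (no_types, lifting) comp_apply empty_subsetI rest_def rest_in)
    then show False using P01(5) by (simp add: crit_edge)
  qed
  show ?thesis using z ne by (auto simp: qcls_def split: if_splits)
qed

lemma crit_C: "crit n i e \<in> CC 1"
proof -
  have "rest 1 (crit n i e \<circ> edge {} {1}) = crit n i e"
    using rest_comp_edge01[OF cells_cmor[OF crit_in]] by simp
  then show ?thesis using cmor_edge01 unfolding collapsed_def by force
qed

lemma htriv_single:
  assumes dv: "dvalid H k (N, {y}, u, w, gs)" and yu: "y u = P0 \<or> y u = P1" and yw: "y w = P0 \<or> y w = P1"
  shows "lrel H k pt pt [(N, {y}, u, w, gs)] []"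
proof -
  have ns: "nsimp N u w k gs" and yc: "{y} \<in> cells H N" using dv by auto
  note sub = nsimp_sub[OF ns]
  have y: "y \<in> cells S N" "y \<notin> CC N" using single_cell[OF yc] by auto
  obtain M F g where F: "F \<in> cells S M" and g: "cmor N M g" and yF: "y = rest N (F \<circ> g)"
    and inj: "inj_on F (Pow {1..M})" using factor[OF y(1)] by blast
  have FnC: "F \<notin> CC M" using C_closed[OF _ g, of F] yF y(2) by auto
  have Fc: "{F} \<in> cells H M" using F FnC unfolding cells_H qcls_def by force
  have Fm: "cmor M n F" using cells_cmor[OF F] .
  have yuF: "y u = F (g u)" "y w = F (g w)" using sub yF by (auto simp: rest_def)
  have b: "([(N, act H N M g {F}, u, w, gs)], [(M, {F}, g u, g w, map (map (\<lambda>e. rest 1 (g \<circ> e))) gs)]) \<in> basic H k"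
    by (rule basic_I2[OF g Fc])
  have actF: "act H N M g {F} = {y}" using y(2) yF by (simp add: act_H_single qcls_def)
  have b': "([(N, {y}, u, w, gs)], [(M, {F}, g u, g w, map (mp g) gs)]) \<in> basic H k"
    using b actF by (simp add: mp_def[abs_def])
  have ns2: "nsimp M (g u) (g w) k (map (mp g) gs)" using nsimp_map[OF g ns] .
  have pu: "vq (y u) = pt" "vq (y w) = pt" using yu yw vq_pt by auto
  have l1: "lrel H k pt pt [(N, {y}, u, w, gs)] [(M, {F}, g u, g w, map (mp g) gs)]"
    apply (rule lrel_basic[OF good_H b'])
    using dv pu ns2 Fc yuF by (auto simp: cvalid1_H)
  have v: "F (g u) = P0 \<or> F (g u) = P1" "F (g w) = P0 \<or> F (g w) = P1" using yu yw yuF by auto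
  show ?thesis
  proof (cases "g u = g w")
    case True
    note CP = canon_paths(1)[OF ns2 Fm inj v True]
    have l2: "lrel H k pt pt [(M, {F}, g u, g w, map (mp g) gs)] [(M, {F}, g u, g w, replicate (Suc k) [])]"
      apply (rule lrel_basic[OF good_H basic_I1])
      using CP apply blast
      using CP ns2 Fc yuF pu by (auto simp: cvalid1_H)
    have l3: "lrel H k pt pt [(M, {F}, g u, g w, replicate (Suc k) [])] []"
      apply (rule lrel_basic[OF good_H])
      using basic_I4 True apply metis
      using CP Fc yuF pu pt_cell True by (auto simp: cvalid1_H)
    show ?thesis using lrel_trans[OF lrel_trans[OF l1 l2] l3] .
  next
    case False
    note CP = canon_paths(2)[OF ns2 Fm inj v False]
    define E where "E = edge (g u) (g w)"
    have Ec: "cmor 1 M E" using CP E_def by simp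
    have l2: "lrel H k pt pt [(M, {F}, g u, g w, map (mp g) gs)] [(M, {F}, g u, g w, replicate (Suc k) [E])]"
      apply (rule lrel_basic[OF good_H basic_I1])
      using CP E_def apply blast
      using CP ns2 Fc yuF pu E_def by (auto simp: cvalid1_H)
    have actE: "act H 1 M E {F} = CC 1"
    proof -
      have "rest 1 (F \<circ> E) \<in> CC 1"
      proof -
        have e1: "rest 1 (F \<circ> E) = edge (F (g u)) (F (g w))" using edge_comp[OF Ec Fm] by (simp add: E_def)
        have su: "u \<subseteq> {1..N}" "w \<subseteq> {1..N}" "u \<subseteq> w" using nsimp_sub[OF ns] by auto
        have gu: "g u \<subseteq> {1..M}" "g w \<subseteq> {1..M}" using cmor_range[OF g] su by auto
        have "g u \<subseteq> g w" using cmor_mono[OF g su(3) su(2)] .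
        then have sb: "F (g u) \<subseteq> F (g w)" using cmor_mono[OF Fm _ gu(2)] by blast
        have nq: "F (g u) \<noteq> F (g w)"
        proof
          assume "F (g u) = F (g w)"
          then have "g u = g w" using inj_onD[OF inj] gu by blast
          then show False using False by simp
        qed
        have "F (g u) = P0" "F (g w) = P1" using v sb nq P01 by auto
        then have "rest 1 (F \<circ> E) = crit n i e" using e1 by (simp add: crit_edge)
        then show ?thesis using crit_C by simp
      qed
      then show ?thesis by (simp add: act_H_single qcls_def)
    qed
    have mpE: "map (map (\<lambda>x. rest 1 (E \<circ> x))) (replicate (Suc k) [edge {} {1}]) = replicate (Suc k) [E]"
      using rest_comp_edge01[OF Ec] by simp
    have b3: "([(1, act H 1 M E {F}, {}, {1}, replicate (Suc k) [edge {} {1}])],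
             [(M, {F}, E {}, E {1}, map (map (\<lambda>x. rest 1 (E \<circ> x))) (replicate (Suc k) [edge {} {1}]))]) \<in> basic H k"
      by (rule basic_I2[OF Ec Fc])
    then have b3': "([(1, CC 1, {}, {1}, replicate (Suc k) [edge {} {1}])], [(M, {F}, g u, g w, replicate (Suc k) [E])]) \<in> basic H k"
      unfolding actE mpE by (simp add: E_def)
    have is1: "is_path 1 {} {1} [edge {} {1}]" using cmor_edge01 by (simp add: is_path_Cons)
    have dC: "dvalid H k (1, CC 1, {}, {1}, replicate (Suc k) [edge {} {1}])"
    proof -
      have "qcls (CC 1) (crit n i e) = CC 1" using crit_C by (simp add: qcls_def)
      then have "CC 1 \<in> cells H 1" unfolding cells_H using crit_in by force
      then show ?thesis using nsimp_replicate[OF is1] by (simp del: replicate_Suc)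
    qed
    have e3: "vq (rep (CC 1) {}) = pt" "vq (rep (CC 1) {1}) = pt" using C_vq[OF rep_C] by auto
    have l3: "lrel H k pt pt [(1, CC 1, {}, {1}, replicate (Suc k) [edge {} {1}])] [(M, {F}, g u, g w, replicate (Suc k) [E])]"
      apply (rule lrel_basic[OF good_H b3'])
      using dC e3 l2 unfolding lrel_def by (auto simp: cvalid1_H)
    have l4: "lrel H k pt pt [(1, CC 1, {}, {1}, replicate (Suc k) [edge {} {1}])] []"
      using htriv_C[OF dC] .
    show ?thesis using lrel_trans[OF lrel_trans[OF l1 l2] lrel_trans[OF lrel_sym[OF l3] l4]] .
  qed
qed

end


declare One_nat_def[simp del]

context cub begin

abbreviation qm :: "nat \<Rightarrow> vmap \<Rightarrow> vmap set" where "qm \<equiv> qmap n i e"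
abbreviation dq :: "vmap datum \<Rightarrow> vmap set datum" where "dq \<equiv> dmap qm"

lemma qm_app: "qm N y = qcls (CC N) y" by (simp add: qmap_def)

lemma dq_simp[simp]: "dq (N, y, u, w, gs) = (N, qcls (CC N) y, u, w, gs)"
  by (simp add: qmap_def)

lemma q0_vtx[simp]: "qm 0 (vtx v) = vq v" by (simp add: qmap_def vq_def)

lemma qcell: "y \<in> cells S N \<Longrightarrow> qcls (CC N) y \<in> cells H N"
  unfolding cells_H by blast

lemma rep_q: assumes y: "y \<in> cells S N" and u: "u \<subseteq> {1..N}"
  shows "vq (rep (qcls (CC N) y) u) = vq (y u)"
proof (cases "y \<in> CC N")
  case True
  then show ?thesis using C_vq[OF rep_C u] C_vq[OF True u] by (simp add: qcls_def)
next
  case False then show ?thesis by (simp add: qcls_def)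
qed

lemma dvalid_q: "dvalid S k d \<Longrightarrow> dvalid H k (dq d)"
  by (cases d) (auto simp: qm_app intro: qcell)

lemma dsrc_q: "dvalid S k d \<Longrightarrow> dsrc H (dq d) = qm 0 (dsrc S d) \<and> dtgt H (dq d) = qm 0 (dtgt S d)"
proof -
  assume h: "dvalid S k d"
  obtain N y u w gs where d: "d = (N, y, u, w, gs)" by (cases d) auto
  have y: "y \<in> cells S N" and ns: "nsimp N u w k gs" using h d by auto
  have s: "u \<subseteq> {1..N}" "w \<subseteq> {1..N}" using nsimp_sub[OF ns] by auto
  show ?thesis using rep_q[OF y s(1)] rep_q[OF y s(2)] d by (simp add: vq_def qm_app)
qed

lemma cells0_S: "a \<in> cells S 0 \<Longrightarrow> qm 0 a \<in> cells H 0"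
  by (simp add: qmap_def qcell)

lemma cvalid_q: "cvalid S k a b X \<Longrightarrow> cvalid H k (qm 0 a) (qm 0 b) (map dq X)"
proof (induction X arbitrary: a)
  case Nil then show ?case using qcell by (auto simp: qm_app)
next
  case (Cons d X)
  then have "dvalid S k d" "dsrc S d = a" "cvalid S k (dtgt S d) b X" by (auto simp: cvalid_Cons[OF good_S])
  then show ?case using Cons.IH dvalid_q dsrc_q by (simp add: cvalid_Cons[OF good_H])
qed

lemma act_q: assumes f: "cmor M N f" and x: "x \<in> cells S N"
  shows "qcls (CC M) (rest M (x \<circ> f)) = act H M N f (qcls (CC N) x)"
proof (cases "x \<in> CC N")
  case True
  then show ?thesis using C_closed[OF True f] act_H_C[OF f] by (simp add: qcls_def)
next
  case False then show ?thesis by (simp add: qcls_def act_H_single)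
qed

lemma crel_I: "(l, r) \<in> basic S' k \<Longrightarrow> cvalid S' k a b (D @ l @ E) \<Longrightarrow> cvalid S' k a b (D @ r @ E)
  \<Longrightarrow> (D @ l @ E, D @ r @ E) \<in> crel S' k"
  unfolding crel_def by blast

lemma basic_cases:
  assumes "(l, r) \<in> basic S' k"
  obtains (A) N x u w gs gs' where "l = [(N, x, u, w, gs)]" "r = [(N, x, u, w, gs')]"
        "list_all2 (\<lambda>g g'. (g, g') \<in> pequiv N u w) gs gs'"
  | (B) M N f x u w gs where "l = [(M, act S' M N f x, u, w, gs)]"
        "r = [(N, x, f u, f w, map (map (\<lambda>e. rest 1 (f \<circ> e))) gs)]" "cmor M N f" "x \<in> cells S' N"
  | (C) N x u v w gs hs where "l = [(N, x, u, v, gs), (N, x, v, w, hs)]" "r = [(N, x, u, w, map2 (@) gs hs)]"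
  | (D) N x u where "l = [(N, x, u, u, replicate (Suc k) [])]" "r = []"
  using assms unfolding basic_def
  apply (elim UnE)
  subgoal apply (simp only: mem_Collect_eq) apply (elim exE conjE) apply (simp only: prod.inject) apply ((blast intro: that(1))+)? done
  subgoal apply (simp only: mem_Collect_eq) apply (elim exE conjE) apply (simp only: prod.inject) apply ((blast intro: that(2))+)? done
  subgoal apply (simp only: mem_Collect_eq) apply (elim exE conjE) apply (simp only: prod.inject) apply ((blast intro: that(3))+)? done
  subgoal apply (simp only: mem_Collect_eq) apply (elim exE conjE) apply (simp only: prod.inject) apply ((blast intro: that(4))+)? done
  done

lemma basic_q: assumes b: "(l, r) \<in> basic S k" shows "(map dq l, map dq r) \<in> basic H k"
proof -
  from b show ?thesis
  proof (cases rule: basic_cases)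
    case A then show ?thesis by (simp add: basic_I1)
  next
    case (B M N f x u w gs)
    have "map dq l = [(M, act H M N f (qcls (CC N) x), u, w, gs)]"
      using B act_q[OF B(3,4)] by (simp add: qm_app)
    moreover have "map dq r = [(N, qcls (CC N) x, f u, f w, map (map (\<lambda>e. rest 1 (f \<circ> e))) gs)]"
      using B by (simp add: qm_app)
    ultimately show ?thesis using basic_I2[OF B(3) qcell[OF B(4)]] by simp
  next
    case C then show ?thesis by (simp add: basic_I3)
  next
    case D then show ?thesis by (simp del: replicate_Suc add: basic_I4)
  qed
qed

lemma ceq_q: "(X, Y) \<in> ceq S k \<Longrightarrow> (map dq X, map dq Y) \<in> ceq H k"
  unfolding ceq_def
proof (induction rule: rtrancl_induct)
  case base then show ?case by simp
next
  case (step y z)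
  have cr: "(map dq Z, map dq Z') \<in> crel H k" if h: "(Z, Z') \<in> crel S k" for Z Z'
  proof -
    from h obtain D l r E a b where z: "Z = D @ l @ E" "Z' = D @ r @ E" and b: "(l, r) \<in> basic S k"
      and v: "cvalid S k a b Z" "cvalid S k a b Z'" unfolding crel_def by blast
    have b2: "(map dq l, map dq r) \<in> basic H k" using basic_q[OF b] .
    have "cvalid H k (qm 0 a) (qm 0 b) (map dq D @ map dq l @ map dq E)"
      "cvalid H k (qm 0 a) (qm 0 b) (map dq D @ map dq r @ map dq E)"
      using cvalid_q[OF v(1)] cvalid_q[OF v(2)] z by simp_all
    from crel_I[OF b2 this] show ?thesis using z by simp
  qed
  from step(2) have "(map dq y, map dq z) \<in> crel H k \<union> (crel H k)\<inverse>" using cr by blast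
  then show ?case using step(3) by (meson rtrancl.rtrancl_into_rtrancl)
qed

end


declare One_nat_def[simp del]

fun sv :: "vmap datum \<Rightarrow> nat set" where "sv (N, y, u, w, gs) = y u"
fun tv :: "vmap datum \<Rightarrow> nat set" where "tv (N, y, u, w, gs) = y w"
fun lift :: "vmap set datum \<Rightarrow> vmap datum" where "lift (N, X, u, w, gs) = (N, rep X, u, w, gs)"

context cub begin

definition ptv :: "nat set \<Rightarrow> bool" where "ptv v \<longleftrightarrow> v = P0 \<or> v = P1"
definition ptl :: "vmap datum \<Rightarrow> bool" where "ptl d \<longleftrightarrow> ptv (sv d) \<and> ptv (tv d)"
definition pre :: "nat \<Rightarrow> nat set \<Rightarrow> nat set \<Rightarrow> vmap datum list" where
  "pre k p s = (if p = s then [] else [cd k])"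
definition lnk :: "nat set \<Rightarrow> nat set \<Rightarrow> bool" where "lnk p s \<longleftrightarrow> p = s \<or> (p = P0 \<and> s = P1)"

fun ins0 :: "nat \<Rightarrow> nat set \<Rightarrow> vmap datum list \<Rightarrow> vmap datum list" where
  "ins0 k p [] = []"
| "ins0 k p (d # F) = pre k p (sv d) @ d # ins0 k (tv d) F"

fun endp :: "nat set \<Rightarrow> vmap datum list \<Rightarrow> nat set" where
  "endp p [] = p"
| "endp p (d # F) = endp (tv d) F"

fun chain0 :: "nat set \<Rightarrow> vmap datum list \<Rightarrow> bool" where
  "chain0 p [] = True"
| "chain0 p (d # F) = (lnk p (sv d) \<and> chain0 (tv d) F)"

definition ins :: "nat \<Rightarrow> nat set \<Rightarrow> vmap datum list \<Rightarrow> nat set \<Rightarrow> vmap datum list" where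
  "ins k p F b = ins0 k p F @ pre k (endp p F) b"

definition filt :: "vmap set datum list \<Rightarrow> vmap datum list" where
  "filt X = filter (\<lambda>d. \<not> ptl d) (map lift X)"

definition Lam :: "nat \<Rightarrow> nat set \<Rightarrow> nat set \<Rightarrow> vmap set datum list \<Rightarrow> vmap datum list" where
  "Lam k a b X = ins k a (filt X) b"

lemma ins0_append: "ins0 k p (A @ B) = ins0 k p A @ ins0 k (endp p A) B"
  by (induction A arbitrary: p) auto

lemma endp_append: "endp p (A @ B) = endp (endp p A) B"
  by (induction A arbitrary: p) auto

lemma chain0_append: "chain0 p (A @ B) \<longleftrightarrow> chain0 p A \<and> chain0 (endp p A) B"
  by (induction A arbitrary: p) auto

lemma filt_append[simp]: "filt (A @ B) = filt A @ filt B" by (simp add: filt_def)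
lemma filt_Nil[simp]: "filt [] = []" by (simp add: filt_def)

lemma pre_same[simp]: "pre k p p = []" by (simp add: pre_def)

lemma pre_pre: "lnk p t \<Longrightarrow> lnk t s \<Longrightarrow> pre k p t @ pre k t s = pre k p s"
  using P01(5) by (auto simp: pre_def lnk_def)

lemma lnk_trans: "lnk p t \<Longrightarrow> lnk t s \<Longrightarrow> lnk p s"
  using P01(5) by (auto simp: lnk_def)

lemma lnk_refl[simp]: "lnk p p" by (simp add: lnk_def)

lemma lnk_pt: "ptv p \<Longrightarrow> ptv t \<Longrightarrow> p \<subseteq> t \<Longrightarrow> lnk p t"
  using P01 by (auto simp: ptv_def lnk_def)

lemma dv_S: assumes "dvalid S k d"
  shows "sv d \<subseteq> {1..n}" "tv d \<subseteq> {1..n}" "sv d \<subseteq> tv d" "dsrc S d = vtx (sv d)" "dtgt S d = vtx (tv d)"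
proof -
  obtain N y u w gs where d: "d = (N, y, u, w, gs)" by (cases d) auto
  have y: "cmor N n y" using assms d cells_cmor by auto
  have ns: "nsimp N u w k gs" using assms d by auto
  have s: "u \<subseteq> {1..N}" "w \<subseteq> {1..N}" "u \<subseteq> w" using nsimp_sub[OF ns] by auto
  show "sv d \<subseteq> {1..n}" "tv d \<subseteq> {1..n}" using cmor_range[OF y] s d by auto
  show "sv d \<subseteq> tv d" using cmor_mono[OF y s(3) s(2)] d by simp
  show "dsrc S d = vtx (sv d)" "dtgt S d = vtx (tv d)" using d by auto
qed

lemma cvalid_pre: "lnk p s \<Longrightarrow> p \<subseteq> {1..n} \<Longrightarrow> cvalid S k (vtx p) (vtx s) (pre k p s)"
  using cd_valid vtx_in by (auto simp: pre_def lnk_def cvalid1)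

lemma cvalid_ins0:
  "chain0 p F \<Longrightarrow> \<forall>d\<in>set F. dvalid S k d \<Longrightarrow> p \<subseteq> {1..n} \<Longrightarrow>
     cvalid S k (vtx p) (vtx (endp p F)) (ins0 k p F) \<and> endp p F \<subseteq> {1..n}"
proof (induction F arbitrary: p)
  case Nil then show ?case using vtx_in by auto
next
  case (Cons d F)
  have dv: "dvalid S k d" and l: "lnk p (sv d)" "chain0 (tv d) F" using Cons.prems by auto
  note D = dv_S[OF dv]
  have IH: "cvalid S k (vtx (tv d)) (vtx (endp (tv d) F)) (ins0 k (tv d) F) \<and> endp (tv d) F \<subseteq> {1..n}"
    using Cons.IH[OF l(2)] Cons.prems D by auto
  have "cvalid S k (vtx (sv d)) (vtx (endp (tv d) F)) (d # ins0 k (tv d) F)"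
    using IH dv D by (simp add: cvalid_Cons[OF good_S])
  then show ?case using cvalid_pre[OF l(1) Cons.prems(3)] IH
    by (auto simp: cvalid_append[OF good_S])
qed

lemma cvalid_ins:
  "chain0 p F \<Longrightarrow> lnk (endp p F) b \<Longrightarrow> \<forall>d\<in>set F. dvalid S k d \<Longrightarrow> p \<subseteq> {1..n} \<Longrightarrow>
     cvalid S k (vtx p) (vtx b) (ins k p F b)"
  using cvalid_ins0[of p F k] cvalid_pre[of "endp p F" b k]
  by (auto simp: ins_def cvalid_append[OF good_S])

end


declare One_nat_def[simp del]

context cub begin

lemma ins_shift:
  assumes "lnk p t" "chain0 t F" "lnk (endp t F) b"
  shows "pre k p t @ ins k t F b = ins k p F b \<and> chain0 p F \<and> lnk (endp p F) b"
proof (cases F)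
  case Nil then show ?thesis using assms pre_pre lnk_trans by (simp add: ins_def)
next
  case (Cons d F')
  then show ?thesis using assms pre_pre[of p t "sv d" k] lnk_trans[of p t "sv d"]
    by (simp add: ins_def)
qed

lemma ins_cons_real: "ins k p (d # F) b = pre k p (sv d) @ d # ins k (tv d) F b"
  by (simp add: ins_def)

lemma cube_norm:
  "cvalid S k (vtx p) (vtx b) Y \<Longrightarrow>
   lrel S k (vtx p) (vtx b) Y (ins k p (filter (\<lambda>d. \<not> ptl d) Y) b) \<and>
   chain0 p (filter (\<lambda>d. \<not> ptl d) Y) \<and> lnk (endp p (filter (\<lambda>d. \<not> ptl d) Y)) b"
proof (induction Y arbitrary: p)
  case Nil
  then have "p = b" by (simp add: vtx_inj)
  then show ?case using Nil by (simp add: ins_def lrel_refl)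
next
  case (Cons d Y)
  have dv: "dvalid S k d" and sd: "dsrc S d = vtx p" and rest: "cvalid S k (dtgt S d) (vtx b) Y"
    using Cons.prems by (auto simp: cvalid_Cons[OF good_S])
  note D = dv_S[OF dv]
  have sp: "sv d = p" using sd D(4) by (simp add: vtx_inj)
  define t where "t = tv d"
  define F where "F = filter (\<lambda>d. \<not> ptl d) Y"
  have IH: "lrel S k (vtx t) (vtx b) Y (ins k t F b) \<and> chain0 t F \<and> lnk (endp t F) b"
    using Cons.IH[of t] rest D(5) by (simp add: t_def F_def)
  have d1: "cvalid S k (vtx p) (vtx t) [d]" using dv D sp by (simp add: cvalid1 t_def)
  have L1: "lrel S k (vtx p) (vtx b) ([d] @ Y) ([d] @ ins k t F b)"
    using lrel_app_left[OF good_S d1] IH by blast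
  show ?case
  proof (cases "ptl d")
    case False
    have "ins k p (filter (\<lambda>d. \<not> ptl d) (d # Y)) b = [d] @ ins k t F b"
      using False sp by (simp add: ins_def F_def t_def)
    then show ?thesis using L1 IH False sp by (simp add: F_def t_def)
  next
    case True
    then have pt2: "ptv p" "ptv t" using sp by (auto simp: ptl_def t_def)
    have ln: "lnk p t" using lnk_pt[OF pt2] D(3) sp by (simp add: t_def)
    obtain N y u w gs where dd: "d = (N, y, u, w, gs)" by (cases d) auto
    have yuw: "y u = p" "y w = t" using sp dd by (auto simp: t_def)
    have T: "lrel S k (vtx p) (vtx t) [d] (pre k p t)"
    proof (cases "p = t")
      case True
      then show ?thesis using triv_eq[of k N y u w gs] dv dd yuw by (simp add: pre_def)
    next
      case False
      then have "p = P0" "t = P1" using ln by (auto simp: lnk_def)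
      then show ?thesis using triv_crit[of k N y u w gs] dv dd yuw False by (simp add: pre_def)
    qed
    have vt: "cvalid S k (vtx t) (vtx b) (ins k t F b)" using IH unfolding lrel_def by blast
    have L2: "lrel S k (vtx p) (vtx b) ([d] @ ins k t F b) (pre k p t @ ins k t F b)"
      using lrel_app_right[OF good_S T vt] .
    note SH = ins_shift[OF ln conjunct1[OF conjunct2[OF IH]] conjunct2[OF conjunct2[OF IH]], of k]
    have "filter (\<lambda>d. \<not> ptl d) (d # Y) = F" using True by (simp add: F_def)
    then show ?thesis using lrel_trans[OF L1 L2] SH by simp
  qed
qed

lemma lift_dq: assumes "dvalid S k d"
  shows "ptl (lift (dq d)) = ptl d" "\<not> ptl d \<Longrightarrow> lift (dq d) = d"
proof -
  obtain N y u w gs where dd: "d = (N, y, u, w, gs)" by (cases d) auto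
  have y: "y \<in> cells S N" and ns: "nsimp N u w k gs" using assms dd by auto
  have s: "u \<subseteq> {1..N}" "w \<subseteq> {1..N}" using nsimp_sub[OF ns] by auto
  have "ptl (lift (dq d)) = ptl d \<and> (\<not> ptl d \<longrightarrow> lift (dq d) = d)"
  proof (cases "y \<in> CC N")
    case True
    have a: "ptl (lift (dq d))" using C_vals[OF rep_C s(1)] C_vals[OF rep_C s(2)] True dd
      by (simp add: ptl_def ptv_def qcls_def qm_app)
    have b: "ptl d" using C_vals[OF True s(1)] C_vals[OF True s(2)] dd by (simp add: ptl_def ptv_def)
    show ?thesis using a b by simp
  next
    case False then show ?thesis using dd by (simp add: qcls_def qm_app)
  qed
  then show "ptl (lift (dq d)) = ptl d" "\<not> ptl d \<Longrightarrow> lift (dq d) = d" by auto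
qed

lemma filt_dq: "\<forall>d\<in>set Y. dvalid S k d \<Longrightarrow> filt (map dq Y) = filter (\<lambda>d. \<not> ptl d) Y"
proof (induction Y)
  case Nil then show ?case by simp
next
  case (Cons d Y)
  then have dv: "dvalid S k d" by simp
  show ?case using Cons lift_dq[OF dv] by (auto simp: filt_def)
qed

lemma cvalid_all: "cvalid S' k a b Y \<Longrightarrow> \<forall>d\<in>set Y. dvalid S' k d"
  by (simp add: cvalid_def)

lemma cube_Lam: "cvalid S k (vtx a) (vtx b) Y \<Longrightarrow> lrel S k (vtx a) (vtx b) Y (Lam k a b (map dq Y))"
  using cube_norm[of k a b Y] filt_dq[OF cvalid_all] by (simp add: Lam_def)

definition adm :: "nat set \<Rightarrow> bool" where "adm p \<longleftrightarrow> (e \<longrightarrow> p \<noteq> P1)"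
definition adm' :: "nat set \<Rightarrow> bool" where "adm' b \<longleftrightarrow> (\<not> e \<longrightarrow> b \<noteq> P0)"

lemma P_e: "e \<Longrightarrow> P0 = {} \<and> P1 = {i}" "\<not> e \<Longrightarrow> P0 = {1..n} - {i} \<and> P1 = {1..n}"
  unfolding P0_def P1_def by simp_all

lemma real_shape: assumes dv: "dvalid S k d" and r: "\<not> ptl d"
  shows "e \<Longrightarrow> \<not> ptv (tv d)" "\<not> e \<Longrightarrow> \<not> ptv (sv d)"
proof -
  note D = dv_S[OF dv]
  show "\<not> ptv (tv d)" if "e"
  proof
    assume "ptv (tv d)"
    then have "tv d \<subseteq> {i}" using P_e(1)[OF that] by (auto simp: ptv_def)
    then have "sv d \<subseteq> {i}" using D(3) by blast
    then have "ptv (sv d)" using P_e(1)[OF that] by (auto simp: ptv_def subset_singleton_iff)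
    then show False using r \<open>ptv (tv d)\<close> by (simp add: ptl_def)
  qed
  show "\<not> ptv (sv d)" if "\<not> e"
  proof
    assume "ptv (sv d)"
    then have "P0 \<subseteq> sv d" using P01 by (auto simp: ptv_def)
    then have "P0 \<subseteq> tv d" "tv d \<subseteq> P1" using D(2,3) P_e(2)[OF that] by auto
    then have "ptv (tv d)" using between_P by (simp add: ptv_def)
    then show False using r \<open>ptv (sv d)\<close> by (simp add: ptl_def)
  qed
qed

lemma lift_valid: "dvalid H k x \<Longrightarrow> dvalid S k (lift x) \<and> dsrc H x = vq (sv (lift x)) \<and> dtgt H x = vq (tv (lift x))"
  by (cases x) (auto intro: rep_cellH)

lemma vq_pt': "ptv v \<Longrightarrow> vq v = pt" using vq_pt by (simp add: ptv_def)

lemma final_lnk: assumes "vq q = vq b" "adm q" "adm' b" shows "lnk q b"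
proof -
  have h: "q = b \<or> ((q = P0 \<or> q = P1) \<and> (b = P0 \<or> b = P1))" using vq_eq[of q b] assms(1) by simp
  have a: "e \<longrightarrow> q \<noteq> P1" "\<not> e \<longrightarrow> b \<noteq> P0" using assms(2,3) unfolding adm_def adm'_def by auto
  show ?thesis using h a P01(5) unfolding lnk_def by blast
qed

lemma hat_chain:
  "cvalid H k (vq p) \<beta> X \<Longrightarrow> p \<subseteq> {1..n} \<Longrightarrow> adm p \<Longrightarrow>
   chain0 p (filt X) \<and> vq (endp p (filt X)) = \<beta> \<and> adm (endp p (filt X)) \<and> endp p (filt X) \<subseteq> {1..n}
   \<and> (\<forall>d\<in>set (filt X). dvalid S k d)"
proof (induction X arbitrary: p)
  case Nil then show ?case by simp
next
  case (Cons x X)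
  have hx: "dvalid H k x" "dsrc H x = vq p" "cvalid H k (dtgt H x) \<beta> X"
    using Cons.prems by (auto simp: cvalid_Cons[OF good_H])
  define d where "d = lift x"
  have dv: "dvalid S k d" and sd: "vq (sv d) = vq p" and td: "cvalid H k (vq (tv d)) \<beta> X"
    using lift_valid[OF hx(1)] hx by (auto simp: d_def)
  note D = dv_S[OF dv]
  show ?case
  proof (cases "ptl d")
    case True
    then have "vq (tv d) = vq p" using sd vq_pt' by (simp add: ptl_def)
    then have "cvalid H k (vq p) \<beta> X" using td by simp
    moreover have "filt (x # X) = filt X" using True by (simp add: filt_def d_def)
    ultimately show ?thesis using Cons.IH Cons.prems by simp
  next
    case False
    have fx: "filt (x # X) = d # filt X" using False by (simp add: filt_def d_def)
    have ln: "lnk p (sv d)"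
    proof -
      have h: "p = sv d \<or> ((p = P0 \<or> p = P1) \<and> (sv d = P0 \<or> sv d = P1))"
        using sd vq_eq[of "sv d" p] by auto
      have a: "e \<longrightarrow> p \<noteq> P1" using Cons.prems(3) unfolding adm_def by auto
      have b: "\<not> e \<longrightarrow> sv d \<noteq> P0" using real_shape(2)[OF dv \<open>\<not> ptl d\<close>] unfolding ptv_def by blast
      show ?thesis using h a b P01(5) unfolding lnk_def by blast
    qed
    have at: "adm (tv d)" using real_shape(1)[OF dv False] unfolding adm_def ptv_def by blast
    have IH: "chain0 (tv d) (filt X) \<and> vq (endp (tv d) (filt X)) = \<beta> \<and> adm (endp (tv d) (filt X))
       \<and> endp (tv d) (filt X) \<subseteq> {1..n} \<and> (\<forall>d\<in>set (filt X). dvalid S k d)"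
      using Cons.IH[OF td D(2) at] .
    show ?thesis unfolding fx using IH ln dv by simp
  qed
qed

lemma Lam_valid:
  assumes "cvalid H k (vq a) (vq b) X" "a \<subseteq> {1..n}" "b \<subseteq> {1..n}" "adm a" "adm' b"
  shows "cvalid S k (vtx a) (vtx b) (Lam k a b X)"
proof -
  note C = hat_chain[OF assms(1-2,4)]
  have "lnk (endp a (filt X)) b" using final_lnk C assms(5) by blast
  then show ?thesis using cvalid_ins C assms(2) by (simp add: Lam_def)
qed

end


declare One_nat_def[simp del]

context cub begin

lemma triv_pre: assumes dv: "dvalid S k d" and pl: "ptl d"
  shows "lrel S k (vtx (sv d)) (vtx (tv d)) [d] (pre k (sv d) (tv d))"
proof -
  obtain N y u w gs where dd: "d = (N, y, u, w, gs)" by (cases d) auto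
  note D = dv_S[OF dv]
  have ln: "lnk (sv d) (tv d)" using lnk_pt D(3) pl by (simp add: ptl_def)
  show ?thesis
  proof (cases "sv d = tv d")
    case True
    then show ?thesis using triv_eq[of k N y u w gs] dv dd by (simp add: pre_def)
  next
    case False
    then have "sv d = P0" "tv d = P1" using ln by (auto simp: lnk_def)
    then show ?thesis using triv_crit[of k N y u w gs] dv dd False by (simp add: pre_def)
  qed
qed

lemma ctx_lrel: "lrel S k (vtx x) (vtx y) A B \<Longrightarrow> cvalid S k (vtx p) (vtx x) P \<Longrightarrow> cvalid S k (vtx y) (vtx s) Q
  \<Longrightarrow> lrel S k (vtx p) (vtx s) (P @ A @ Q) (P @ B @ Q)"
  using lrel_app_left[OF good_S] lrel_app_right[OF good_S] by blast

lemma ins_single: "ins k p [d] s = pre k p (sv d) @ [d] @ pre k (tv d) s"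
  by (simp add: ins_def)

lemma ins_Nil: "ins k p [] s = pre k p s" by (simp add: ins_def)

lemma cvalid_single_S: "dvalid S k d \<Longrightarrow> cvalid S k (vtx (sv d)) (vtx (tv d)) [d]"
  using dv_S by (simp add: cvalid1)

lemma pre_valid': "lnk p s \<Longrightarrow> p \<subseteq> {1..n} \<Longrightarrow> cvalid S k (vtx p) (vtx s) (pre k p s)"
  by (rule cvalid_pre)

lemma core:
  assumes b: "(l, r) \<in> basic H k"
    and vl: "cvalid H k (vq p) \<delta> l" and vr: "cvalid H k (vq p) \<delta> r"
    and p: "p \<subseteq> {1..n}"
    and cl: "chain0 p (filt l)" "lnk (endp p (filt l)) s" "\<forall>d\<in>set (filt l). dvalid S k d"
    and cr: "chain0 p (filt r)" "lnk (endp p (filt r)) s" "\<forall>d\<in>set (filt r). dvalid S k d"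
  shows "lrel S k (vtx p) (vtx s) (ins k p (filt l) s) (ins k p (filt r) s)"
proof -
  have Vl: "cvalid S k (vtx p) (vtx s) (ins k p (filt l) s)" using cvalid_ins cl p by blast
  have Vr: "cvalid S k (vtx p) (vtx s) (ins k p (filt r) s)" using cvalid_ins cr p by blast
  have same: "filt l = filt r \<Longrightarrow> ?thesis" using Vl by (simp add: lrel_refl)
  have dvl: "\<forall>x\<in>set l. dvalid H k x" "\<forall>x\<in>set r. dvalid H k x" using cvalid_all[OF vl] cvalid_all[OF vr] by auto
  from b show ?thesis
  proof (cases rule: basic_cases)
    case (A N X u w gs gs')
    define dl where "dl = (N, rep X, u, w, gs)"
    define dr where "dr = (N, rep X, u, w, gs')"
    have fl: "filt l = filter (\<lambda>d. \<not> ptl d) [dl]" "filt r = filter (\<lambda>d. \<not> ptl d) [dr]"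
      using A by (simp_all add: filt_def dl_def dr_def)
    have eq: "sv dl = sv dr" "tv dl = tv dr" "ptl dl = ptl dr" by (simp_all add: dl_def dr_def ptl_def)
    show ?thesis
    proof (cases "ptl dl")
      case True then show ?thesis using fl eq same by simp
    next
      case False
      then have f2: "filt l = [dl]" "filt r = [dr]" using fl eq by auto
      have dv: "dvalid S k dl" "dvalid S k dr" using cl(3) cr(3) f2 by auto
      have bb: "([dl], [dr]) \<in> basic S k" using basic_I1[OF A(3)] by (simp add: dl_def dr_def)
      have L: "lrel S k (vtx (sv dl)) (vtx (tv dl)) [dl] [dr]"
        apply (rule lrel_basic[OF good_S bb]) using dv eq cvalid_single_S by metis+
      have P: "cvalid S k (vtx p) (vtx (sv dl)) (pre k p (sv dl))" using cl(1) f2 p by (simp add: cvalid_pre)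
      have Q: "cvalid S k (vtx (tv dl)) (vtx s) (pre k (tv dl) s)"
        using cl(2) f2 dv_S[OF dv(1)] by (simp add: cvalid_pre)
      show ?thesis using ctx_lrel[OF L P Q] f2 eq by (simp add: ins_single)
    qed
  next
    case (B M N f X u w gs)
    have dl0: "dvalid H k (M, act H M N f X, u, w, gs)" "dvalid H k (N, X, f u, f w, map (map (\<lambda>e. rest 1 (f \<circ> e))) gs)"
      using dvl B by auto
    have nsl: "nsimp M u w k gs" using dl0(1) by simp
    have su: "u \<subseteq> {1..M}" "w \<subseteq> {1..M}" using nsimp_sub[OF nsl] by auto
    have sfu: "f u \<subseteq> {1..N}" "f w \<subseteq> {1..N}" using cmor_range[OF B(3)] su by auto
    from B(4) show ?thesis
    proof (cases rule: cellH_cases)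
      case 1
      have "act H M N f X = CC M" using act_H_C[OF B(3)] 1 by simp
      then have "filt l = []" "filt r = []" using B 1 C_vals[OF rep_C su(1)] C_vals[OF rep_C su(2)]
          C_vals[OF rep_C sfu(1)] C_vals[OF rep_C sfu(2)]
        by (auto simp: filt_def ptl_def ptv_def)
      then show ?thesis using same by simp
    next
      case (2 z)
      have actz: "act H M N f X = qcls (CC M) (rest M (z \<circ> f))" using 2 by (simp add: act_H_single)
      have zu: "rest M (z \<circ> f) u = z (f u)" "rest M (z \<circ> f) w = z (f w)" using su by (auto simp: rest_def)
      show ?thesis
      proof (cases "rest M (z \<circ> f) \<in> CC M")
        case True
        have "filt l = []" "filt r = []"
          using B 2 actz True C_vals[OF rep_C su(1)] C_vals[OF rep_C su(2)]
            C_vals[OF True su(1)] C_vals[OF True su(2)] zu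
          by (auto simp: filt_def ptl_def ptv_def qcls_def)
        then show ?thesis using same by simp
      next
        case False
        define dl where "dl = (M, rest M (z \<circ> f), u, w, gs)"
        define dr where "dr = (N, z, f u, f w, map (map (\<lambda>e. rest 1 (f \<circ> e))) gs)"
        have fl: "filt l = filter (\<lambda>d. \<not> ptl d) [dl]" "filt r = filter (\<lambda>d. \<not> ptl d) [dr]"
          using B 2 actz False by (simp_all add: filt_def dl_def dr_def qcls_def)
        have eq: "sv dl = sv dr" "tv dl = tv dr" "ptl dl = ptl dr" using zu by (simp_all add: dl_def dr_def ptl_def)
        show ?thesis
        proof (cases "ptl dl")
          case True then show ?thesis using fl eq same by simp
        next
          case False
          then have f2: "filt l = [dl]" "filt r = [dr]" using fl eq by auto
          have dv: "dvalid S k dl" "dvalid S k dr" using cl(3) cr(3) f2 by auto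
          have bb: "([dl], [dr]) \<in> basic S k" using basic_I2[OF B(3) 2(2), of u w gs k] by (simp add: dl_def dr_def)
          have L: "lrel S k (vtx (sv dl)) (vtx (tv dl)) [dl] [dr]"
            apply (rule lrel_basic[OF good_S bb]) using dv eq cvalid_single_S by metis+
          have P: "cvalid S k (vtx p) (vtx (sv dl)) (pre k p (sv dl))" using cl(1) f2 p by (simp add: cvalid_pre)
          have Q: "cvalid S k (vtx (tv dl)) (vtx s) (pre k (tv dl) s)"
            using cl(2) f2 dv_S[OF dv(1)] by (simp add: cvalid_pre)
          show ?thesis using ctx_lrel[OF L P Q] f2 eq by (simp add: ins_single)
        qed
      qed
    qed
  next
    case (C N X u v w gs hs)
    define y where "y = rep X"
    define d1 where "d1 = (N, y, u, v, gs)"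
    define d2 where "d2 = (N, y, v, w, hs)"
    define d12 where "d12 = (N, y, u, w, map2 (@) gs hs)"
    have dv: "dvalid S k d1" "dvalid S k d2" "dvalid S k d12"
      using dvl C lift_valid by (auto simp: d1_def d2_def d12_def y_def)
    have fl: "filt l = filter (\<lambda>d. \<not> ptl d) [d1, d2]" "filt r = filter (\<lambda>d. \<not> ptl d) [d12]"
      using C by (simp_all add: filt_def d1_def d2_def d12_def y_def)
    have sv: "sv d1 = y u" "tv d1 = y v" "sv d2 = y v" "tv d2 = y w" "sv d12 = y u" "tv d12 = y w"
      by (simp_all add: d1_def d2_def d12_def)
    have m: "y u \<subseteq> y v" "y v \<subseteq> y w" using dv_S(3)[OF dv(1)] dv_S(3)[OF dv(2)] sv by auto
    have bb: "([d1, d2], [d12]) \<in> basic S k" using basic_I3 by (simp add: d1_def d2_def d12_def)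
    have v12: "cvalid S k (vtx (y u)) (vtx (y w)) [d1, d2]" using dv sv dv_S[OF dv(1)] dv_S[OF dv(2)] vtx_in
      by (simp add: cvalid_Cons[OF good_S])
    have L12: "lrel S k (vtx (y u)) (vtx (y w)) [d1, d2] [d12]"
      apply (rule lrel_basic[OF good_S bb v12]) using cvalid_single_S[OF dv(3)] sv by simp
    show ?thesis
    proof (cases "ptl d12")
      case True
      then have "ptv (y u)" "ptv (y w)" using sv by (auto simp: ptl_def)
      then have "ptv (y v)" using m P01 between_P by (auto simp: ptv_def)
      then have "ptl d1" "ptl d2" using sv \<open>ptv (y u)\<close> \<open>ptv (y w)\<close> by (auto simp: ptl_def)
      then have "filt l = []" "filt r = []" using fl True by auto
      then show ?thesis using same by simp
    next
      case F12: False
      have fr: "filt r = [d12]" using fl F12 by simp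
      have P: "cvalid S k (vtx p) (vtx (y u)) (pre k p (y u))" using cr(1) fr p sv by (simp add: cvalid_pre)
      have Q: "cvalid S k (vtx (y w)) (vtx s) (pre k (y w) s)"
        using cr(2) fr dv_S[OF dv(3)] sv by (simp add: cvalid_pre)
      have Rr: "ins k p (filt r) s = pre k p (y u) @ [d12] @ pre k (y w) s" using fr sv by (simp add: ins_single)
      show ?thesis
      proof (cases "ptl d1")
        case T1: True
        show ?thesis
        proof (cases "ptl d2")
          case True
          then have False using T1 F12 sv by (simp add: ptl_def)
          then show ?thesis ..
        next
          case F2: False
          have flx: "filt l = [d2]" using fl T1 F2 by simp
          have T: "lrel S k (vtx (y u)) (vtx (y v)) [d1] (pre k (y u) (y v))" using triv_pre[OF dv(1) T1] sv by simp
          have v2: "cvalid S k (vtx (y v)) (vtx (y w)) [d2]" using cvalid_single_S[OF dv(2)] sv by simp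
          have L2: "lrel S k (vtx (y u)) (vtx (y w)) [d1, d2] (pre k (y u) (y v) @ [d2])"
            using lrel_app_right[OF good_S T v2] by simp
          have lp: "lnk p (y u)" using cr(1) fr sv by simp
          have luv: "lnk (y u) (y v)" using lnk_pt T1 sv m by (simp add: ptl_def)
          have LL: "lrel S k (vtx p) (vtx s) (pre k p (y u) @ [d12] @ pre k (y w) s)
                  (pre k p (y u) @ (pre k (y u) (y v) @ [d2]) @ pre k (y w) s)"
            using ctx_lrel[OF lrel_trans[OF lrel_sym[OF L12] L2] P Q] by simp
          have "ins k p (filt l) s = pre k p (y u) @ (pre k (y u) (y v) @ [d2]) @ pre k (y w) s"
            using flx sv pre_pre[OF lp luv, of k] by (simp add: ins_single)
          then show ?thesis using LL Rr by (simp add: lrel_sym)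
        qed
      next
        case F1: False
        show ?thesis
        proof (cases "ptl d2")
          case F2: False
          have flx: "filt l = [d1, d2]" using fl F1 F2 by simp
          have "ins k p (filt l) s = pre k p (y u) @ [d1, d2] @ pre k (y w) s"
            using flx sv by (simp add: ins_def)
          then show ?thesis using ctx_lrel[OF L12 P Q] Rr by simp
        next
          case T2: True
          have flx: "filt l = [d1]" using fl F1 T2 by simp
          have T: "lrel S k (vtx (y v)) (vtx (y w)) [d2] (pre k (y v) (y w))" using triv_pre[OF dv(2) T2] sv by simp
          have v1: "cvalid S k (vtx (y u)) (vtx (y v)) [d1]" using cvalid_single_S[OF dv(1)] sv by simp
          have L2: "lrel S k (vtx (y u)) (vtx (y w)) [d1, d2] ([d1] @ pre k (y v) (y w))"
            using lrel_app_left[OF good_S v1 T] by simp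
          have ls: "lnk (y w) s" using cr(2) fr sv by simp
          have lvw: "lnk (y v) (y w)" using lnk_pt T2 sv m by (simp add: ptl_def)
          have LL: "lrel S k (vtx p) (vtx s) (pre k p (y u) @ [d12] @ pre k (y w) s)
                  (pre k p (y u) @ ([d1] @ pre k (y v) (y w)) @ pre k (y w) s)"
            using ctx_lrel[OF lrel_trans[OF lrel_sym[OF L12] L2] P Q] by simp
          have "ins k p (filt l) s = pre k p (y u) @ ([d1] @ pre k (y v) (y w)) @ pre k (y w) s"
            using flx sv pre_pre[OF lvw ls, of k] by (simp add: ins_single)
          then show ?thesis using LL Rr by (simp add: lrel_sym)
        qed
      qed
    qed
  next
    case (D N X u)
    define d where "d = (N, rep X, u, u, replicate (Suc k) ([] :: vmap list))"
    have fl: "filt l = filter (\<lambda>d. \<not> ptl d) [d]" "filt r = []"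
      using D by (simp_all add: filt_def d_def del: replicate_Suc)
    show ?thesis
    proof (cases "ptl d")
      case True then show ?thesis using fl same by simp
    next
      case False
      then have f2: "filt l = [d]" using fl by simp
      have dv: "dvalid S k d" using cl(3) f2 by auto
      have st: "sv d = tv d" by (simp add: d_def)
      have np: "\<not> ptv (sv d)" using False st by (simp add: ptl_def)
      have "lnk p (sv d)" using cl(1) f2 by simp
      then have ps: "p = sv d" using np by (auto simp: lnk_def ptv_def)
      have bb: "([d], []) \<in> basic S k" using basic_I4 by (simp add: d_def del: replicate_Suc)
      have L: "lrel S k (vtx (sv d)) (vtx (tv d)) [d] []"
        apply (rule lrel_basic[OF good_S bb]) using cvalid_single_S[OF dv] st dv_S[OF dv] vtx_in by auto
      have Q: "cvalid S k (vtx (tv d)) (vtx s) (pre k (tv d) s)"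
        using cl(2) f2 dv_S[OF dv] by (simp add: cvalid_pre)
      have "lrel S k (vtx p) (vtx s) ([] @ [d] @ pre k (tv d) s) ([] @ [] @ pre k (tv d) s)"
        apply (rule ctx_lrel[OF L _ Q]) using ps vtx_in p by simp
      then show ?thesis using f2 fl ps st by (simp add: ins_single ins_Nil)
    qed
  qed
qed

end


declare One_nat_def[simp del]

fun fst_pt :: "vmap datum list \<Rightarrow> nat set \<Rightarrow> nat set" where
  "fst_pt [] b = b"
| "fst_pt (d # F) b = sv d"

lemma mid_left: "cvalid S' k a c P \<Longrightarrow> cvalid S' k a c' P \<Longrightarrow> c = c'"
  by (cases "P = []") (auto dest: cvalid_ends)

lemma mid_right: "cvalid S' k c b Q \<Longrightarrow> cvalid S' k c' b Q \<Longrightarrow> c = c'"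
  by (cases "Q = []") (auto dest: cvalid_ends)

lemma ceq_rtrancl: "(ceq S' k)\<^sup>* = ceq S' k"
  unfolding ceq_def by simp

context cub begin

lemma ins_split:
  assumes "chain0 q F" "lnk (endp q F) b"
  shows "ins k q F b = pre k q (fst_pt F b) @ ins k (fst_pt F b) F b \<and> lnk q (fst_pt F b)
     \<and> chain0 (fst_pt F b) F \<and> lnk (endp (fst_pt F b) F) b"
proof (cases F)
  case Nil then show ?thesis using assms by (simp add: ins_def)
next
  case (Cons d F') then show ?thesis using assms by (simp add: ins_def)
qed

lemma Lam_step:
  assumes b: "(l, r) \<in> basic H k"
    and v1: "cvalid H k (vq a) (vq bb) (D @ l @ E)" and v2: "cvalid H k (vq a) (vq bb) (D @ r @ E)"
    and ab: "a \<subseteq> {1..n}" "bb \<subseteq> {1..n}" and ad: "adm a" "adm' bb"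
  shows "(Lam k a bb (D @ l @ E), Lam k a bb (D @ r @ E)) \<in> ceq S k"
proof -
  obtain \<gamma> \<delta> where vD: "cvalid H k (vq a) \<gamma> D" and vl: "cvalid H k \<gamma> \<delta> l" and vE: "cvalid H k \<delta> (vq bb) E"
    using v1 by (auto simp: cvalid_append[OF good_H])
  obtain \<gamma>' \<delta>' where vD': "cvalid H k (vq a) \<gamma>' D" and vr: "cvalid H k \<gamma>' \<delta>' r" and vE': "cvalid H k \<delta>' (vq bb) E"
    using v2 by (auto simp: cvalid_append[OF good_H])
  have g: "\<gamma>' = \<gamma>" using mid_left[OF vD' vD] .
  have d: "\<delta>' = \<delta>" using mid_right[OF vE' vE] .
  note CD = hat_chain[OF vD ab(1) ad(1)]
  define p where "p = endp a (filt D)"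
  have vl': "cvalid H k (vq p) \<delta> l" using vl CD by (simp add: p_def)
  have vr': "cvalid H k (vq p) \<delta> r" using vr CD g d by (simp add: p_def)
  have pp: "p \<subseteq> {1..n}" "adm p" using CD by (simp_all add: p_def)
  note Cl = hat_chain[OF vl' pp]
  note Cr = hat_chain[OF vr' pp]
  define q where "q = endp p (filt l)"
  define q' where "q' = endp p (filt r)"
  have vEq: "cvalid H k (vq q) (vq bb) E" using vE Cl by (simp add: q_def)
  have vEq': "cvalid H k (vq q') (vq bb) E" using vE Cr by (simp add: q'_def)
  note CE = hat_chain[OF vEq] and CE' = hat_chain[OF vEq']
  have qq: "q \<subseteq> {1..n}" "adm q" "q' \<subseteq> {1..n}" "adm q'" using Cl Cr by (simp_all add: q_def q'_def)
  have fl: "lnk (endp q (filt E)) bb" using final_lnk CE[OF qq(1,2)] ad(2) by blast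
  have fl': "lnk (endp q' (filt E)) bb" using final_lnk CE'[OF qq(3,4)] ad(2) by blast
  define s where "s = fst_pt (filt E) bb"
  note SP = ins_split[OF conjunct1[OF CE[OF qq(1,2)]] fl, of k, folded s_def]
  note SP' = ins_split[OF conjunct1[OF CE'[OF qq(3,4)]] fl', of k, folded s_def]
  have Lx: "Lam k a bb (D @ l @ E) = ins0 k a (filt D) @ ins k p (filt l) s @ ins k s (filt E) bb"
    using SP unfolding Lam_def ins_def
    by (simp add: ins0_append endp_append p_def q_def ins_def)
  have Lx': "Lam k a bb (D @ r @ E) = ins0 k a (filt D) @ ins k p (filt r) s @ ins k s (filt E) bb"
    using SP' unfolding Lam_def ins_def
    by (simp add: ins0_append endp_append p_def q'_def ins_def)
  have core': "lrel S k (vtx p) (vtx s) (ins k p (filt l) s) (ins k p (filt r) s)"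
    apply (rule core[OF b vl' vr' pp(1)])
    using Cl Cr SP SP' by (simp_all add: q_def q'_def)
  have P: "cvalid S k (vtx a) (vtx p) (ins0 k a (filt D))"
    using cvalid_ins0[of a "filt D" k] CD ab by (simp add: p_def)
  have ssub: "s \<subseteq> {1..n}"
  proof (cases "filt E")
    case Nil then show ?thesis using ab by (simp add: s_def)
  next
    case (Cons d F)
    then have "dvalid S k d" using CE[OF qq(1,2)] by simp
    then show ?thesis using dv_S Cons by (simp add: s_def)
  qed
  have Q: "cvalid S k (vtx s) (vtx bb) (ins k s (filt E) bb)"
    using cvalid_ins SP CE[OF qq(1,2)] ssub by blast
  show ?thesis using lrel_ceq[OF ctx_lrel[OF core' P Q]] Lx Lx' by simp
qed

lemma inj_case:
  assumes ne: "vq a \<noteq> vq bb" and ab: "a \<subseteq> {1..n}" "bb \<subseteq> {1..n}" and ad: "adm a" "adm' bb"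
    and Y1: "cvalid S k (vtx a) (vtx bb) Y1" and Y2: "cvalid S k (vtx a) (vtx bb) Y2"
    and h: "(map dq Y1, map dq Y2) \<in> ceq H k"
  shows "(Y1, Y2) \<in> ceq S k"
proof -
  have v: "cvalid H k (vq a) (vq bb) (map dq Y1)" using cvalid_q[OF Y1] by simp
  have "(Lam k a bb (map dq Y1), Lam k a bb (map dq Y2)) \<in> (ceq S k)\<^sup>* \<and> cvalid H k (vq a) (vq bb) (map dq Y2)"
  proof (rule ceq_invariant[OF h v ne])
    fix Z Z' assume z: "cvalid H k (vq a) (vq bb) Z" "cvalid H k (vq a) (vq bb) Z'" "(Z, Z') \<in> crel H k"
    from z(3) obtain D l r E where zz: "Z = D @ l @ E" "Z' = D @ r @ E" "(l, r) \<in> basic H k"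
      by (rule crel_cases)
    have "(Lam k a bb Z, Lam k a bb Z') \<in> ceq S k"
      using Lam_step[OF zz(3) _ _ ab ad] z zz by simp
    then show "(Lam k a bb Z, Lam k a bb Z') \<in> ceq S k \<and> (Lam k a bb Z', Lam k a bb Z) \<in> ceq S k"
      using ceq_sym by blast
  qed
  then have L: "(Lam k a bb (map dq Y1), Lam k a bb (map dq Y2)) \<in> ceq S k" by (simp add: ceq_rtrancl)
  have A1: "(Y1, Lam k a bb (map dq Y1)) \<in> ceq S k" using lrel_ceq[OF cube_Lam[OF Y1]] .
  have A2: "(Y2, Lam k a bb (map dq Y2)) \<in> ceq S k" using lrel_ceq[OF cube_Lam[OF Y2]] .
  show ?thesis using ceq_trans[OF ceq_trans[OF A1 L] ceq_sym[OF A2]] .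
qed

lemma cvalid_mono: "cvalid S k (vtx p) (vtx b) Y \<Longrightarrow> p \<subseteq> b"
proof (induction Y arbitrary: p)
  case Nil then show ?case by (simp add: vtx_inj)
next
  case (Cons d Y)
  then have dv: "dvalid S k d" "dsrc S d = vtx p" "cvalid S k (dtgt S d) (vtx b) Y"
    by (auto simp: cvalid_Cons[OF good_S])
  note D = dv_S[OF dv(1)]
  have "sv d = p" using dv(2) D(4) by (simp add: vtx_inj)
  then show ?case using Cons.IH[of "tv d"] dv(3) D by auto
qed

lemma loop_norm:
  "cvalid S k (vtx p) (vtx b) Y \<Longrightarrow> lnk p b \<Longrightarrow> lrel S k (vtx p) (vtx b) Y (pre k p b)"
proof (induction Y arbitrary: p)
  case Nil then show ?case by (auto simp: vtx_inj intro!: lrel_refl)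
next
  case (Cons d Y)
  then have dv: "dvalid S k d" "dsrc S d = vtx p" and rest0: "cvalid S k (dtgt S d) (vtx b) Y"
    by (auto simp: cvalid_Cons[OF good_S])
  note D = dv_S[OF dv(1)]
  have rest: "cvalid S k (vtx (tv d)) (vtx b) Y" using rest0 D(5) by simp
  have sp: "sv d = p" using dv(2) D(4) by (simp add: vtx_inj)
  have tb: "tv d \<subseteq> b" using cvalid_mono[OF rest] .
  have d1: "cvalid S k (vtx p) (vtx (tv d)) [d]" using cvalid_single_S[OF dv(1)] sp by simp
  show ?case
  proof (cases "p = b")
    case True
    then have t: "tv d = p" using tb D(3) sp by auto
    obtain N y u w gs where dd: "d = (N, y, u, w, gs)" by (cases d) auto
    have T: "lrel S k (vtx p) (vtx (tv d)) [d] []" using triv_eq[of k N y u w gs] dv(1) dd sp t by simp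
    have IH: "lrel S k (vtx (tv d)) (vtx b) Y (pre k (tv d) b)" using Cons.IH[OF rest] t True by simp
    have "lrel S k (vtx p) (vtx b) ([d] @ Y) ([] @ Y)" using lrel_app_right[OF good_S T rest] .
    then show ?thesis using IH t True by (auto intro: lrel_trans)
  next
    case False
    then have pb: "p = P0" "b = P1" using Cons.prems(2) by (auto simp: lnk_def)
    then have "P0 \<subseteq> tv d" "tv d \<subseteq> P1" using D(3) sp tb by auto
    then have pt: "ptv (tv d)" using between_P by (simp add: ptv_def)
    have pl: "ptl d" using pt sp pb by (simp add: ptl_def ptv_def)
    have T: "lrel S k (vtx p) (vtx (tv d)) [d] (pre k p (tv d))" using triv_pre[OF dv(1) pl] sp by simp
    have l1: "lnk p (tv d)" "lnk (tv d) b" using lnk_pt pt pb D(3) sp tb by (auto simp: ptv_def)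
    have IH: "lrel S k (vtx (tv d)) (vtx b) Y (pre k (tv d) b)" using Cons.IH[OF rest l1(2)] .
    have "lrel S k (vtx p) (vtx b) ([d] @ Y) (pre k p (tv d) @ Y)" using lrel_app_right[OF good_S T rest] .
    moreover have "cvalid S k (vtx p) (vtx (tv d)) (pre k p (tv d))" using T unfolding lrel_def by blast
    then have "lrel S k (vtx p) (vtx b) (pre k p (tv d) @ Y) (pre k p (tv d) @ pre k (tv d) b)"
      using lrel_app_left[OF good_S _ IH] by blast
    ultimately show ?thesis using pre_pre[OF l1, of k] by (auto intro: lrel_trans)
  qed
qed

lemma htriv: assumes dv: "dvalid H k x" and pl: "ptl (lift x)" shows "lrel H k pt pt [x] []"
proof -
  obtain N X u w gs where xx: "x = (N, X, u, w, gs)" by (cases x) auto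
  have Xc: "X \<in> cells H N" using dv xx by simp
  from Xc show ?thesis
  proof (cases rule: cellH_cases)
    case 1 then show ?thesis using htriv_C dv xx by simp
  next
    case (2 y)
    then show ?thesis using htriv_single[of k N y u w gs] dv xx pl by (simp add: ptl_def ptv_def)
  qed
qed

lemma hat_filter:
  "cvalid H k \<alpha> \<beta> X \<Longrightarrow> lrel H k \<alpha> \<beta> X (filter (\<lambda>x. \<not> ptl (lift x)) X)"
proof (induction X arbitrary: \<alpha>)
  case Nil then show ?case by (auto intro!: lrel_refl)
next
  case (Cons x X)
  then have dv: "dvalid H k x" "dsrc H x = \<alpha>" and rest: "cvalid H k (dtgt H x) \<beta> X"
    by (auto simp: cvalid_Cons[OF good_H])
  note IH = Cons.IH[OF rest]
  have x1: "cvalid H k \<alpha> (dtgt H x) [x]" using dv good_H' by (simp add: cvalid1_H)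
  show ?case
  proof (cases "ptl (lift x)")
    case False
    then show ?thesis using lrel_app_left[OF good_H x1 IH] by simp
  next
    case True
    note LV = lift_valid[OF dv(1)]
    have a: "\<alpha> = pt" "dtgt H x = pt" using LV dv True vq_pt' by (auto simp: ptl_def)
    have T: "lrel H k pt pt [x] []" using htriv[OF dv(1) True] .
    have L1: "lrel H k \<alpha> \<beta> (x # X) X" using lrel_app_right[OF good_H T] rest a by simp
    have IH': "lrel H k \<alpha> \<beta> X (filter (\<lambda>x. \<not> ptl (lift x)) X)" using IH a by simp
    show ?thesis using lrel_trans[OF L1 IH'] True by simp
  qed
qed

lemma cd_ptl: "ptl (lift (dq (cd k)))"
proof -
  have "rep (CC 1) {} = P0 \<or> rep (CC 1) {} = P1" "rep (CC 1) {1} = P0 \<or> rep (CC 1) {1} = P1"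
    using C_vals[OF rep_C] by auto
  then show ?thesis using crit_C by (simp add: cd_def qcls_def ptl_def ptv_def qm_app)
qed

lemma filter_pre: "filter (\<lambda>x. \<not> ptl (lift x)) (map dq (pre k p s)) = []"
  using cd_ptl by (simp add: pre_def)

lemma filter_ins0: "\<forall>d\<in>set F. dvalid S k d \<and> \<not> ptl d \<Longrightarrow>
  filter (\<lambda>x. \<not> ptl (lift x)) (map dq (ins0 k p F)) = map dq F"
proof (induction F arbitrary: p)
  case Nil then show ?case by simp
next
  case (Cons d F)
  then have "dvalid S k d" "\<not> ptl d" by auto
  then have "\<not> ptl (lift (dq d))" using lift_dq by simp
  then show ?case using Cons filter_pre by simp
qed

lemma map_dq_filt: "\<forall>x\<in>set X. dvalid H k x \<Longrightarrow> map dq (filt X) = filter (\<lambda>x. \<not> ptl (lift x)) X"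
proof (induction X)
  case Nil then show ?case by simp
next
  case (Cons x X)
  then have dv: "dvalid H k x" by simp
  obtain N Xc u w gs where xx: "x = (N, Xc, u, w, gs)" by (cases x) auto
  have Xc: "Xc \<in> cells H N" and ns: "nsimp N u w k gs" using dv xx by auto
  have su: "u \<subseteq> {1..N}" "w \<subseteq> {1..N}" using nsimp_sub[OF ns] by auto
  have "\<not> ptl (lift x) \<Longrightarrow> dq (lift x) = x"
  proof -
    assume np: "\<not> ptl (lift x)"
    from Xc show "dq (lift x) = x"
    proof (cases rule: cellH_cases)
      case 1
      then have "ptl (lift x)" using C_vals[OF rep_C su(1)] C_vals[OF rep_C su(2)] xx by (simp add: ptl_def ptv_def)
      then show ?thesis using np by simp
    next
      case (2 y) then show ?thesis using xx by (simp add: qcls_def qm_app)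
    qed
  qed
  then show ?case using Cons by (auto simp: filt_def)
qed

lemma surj_case:
  assumes X: "cvalid H k (vq a) (vq bb) X" and ab: "a \<subseteq> {1..n}" "bb \<subseteq> {1..n}" and ad: "adm a" "adm' bb"
  shows "cvalid S k (vtx a) (vtx bb) (Lam k a bb X) \<and> (map dq (Lam k a bb X), X) \<in> ceq H k"
proof -
  have V: "cvalid S k (vtx a) (vtx bb) (Lam k a bb X)" using Lam_valid[OF X ab ad] .
  note C = hat_chain[OF X ab(1) ad(1)]
  have FD: "\<forall>d\<in>set (filt X). dvalid S k d \<and> \<not> ptl d" using C by (auto simp: filt_def)
  have e1: "filter (\<lambda>x. \<not> ptl (lift x)) (map dq (Lam k a bb X)) = map dq (filt X)"
    using filter_ins0[OF FD] filter_pre by (simp add: Lam_def ins_def)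
  have e2: "map dq (filt X) = filter (\<lambda>x. \<not> ptl (lift x)) X" using map_dq_filt cvalid_all[OF X] by blast
  have VH: "cvalid H k (vq a) (vq bb) (map dq (Lam k a bb X))" using cvalid_q[OF V] by simp
  have L1: "(map dq (Lam k a bb X), filter (\<lambda>x. \<not> ptl (lift x)) X) \<in> ceq H k"
    using lrel_ceq[OF hat_filter[OF VH]] e1 e2 by simp
  have L2: "(X, filter (\<lambda>x. \<not> ptl (lift x)) X) \<in> ceq H k" using lrel_ceq[OF hat_filter[OF X]] .
  show ?thesis using V ceq_trans[OF L1 ceq_sym[OF L2]] by simp
qed

end


declare One_nat_def[simp del]

context cub begin

lemma Cmap_class: "Cmap H qm k (ceq S k `` {Y}) = ceq H k `` {map dq Y}"
proof -
  define Y' where "Y' = (SOME ds. ds \<in> ceq S k `` {Y})"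
  have "Y \<in> ceq S k `` {Y}" by simp
  then have "Y' \<in> ceq S k `` {Y}" unfolding Y'_def by (rule someI)
  then have "(Y, Y') \<in> ceq S k" by simp
  then have "(map dq Y, map dq Y') \<in> ceq H k" by (rule ceq_q)
  then show ?thesis unfolding Cmap_def Y'_def[symmetric] using ceq_class_eq by metis
qed

theorem main_bij:
  assumes ab: "a \<subseteq> {1..n}" "bb \<subseteq> {1..n}" and ad: "adm a" "adm' bb"
  shows "bij_betw (Cmap H qm k) (Chom S k (vtx a) (vtx bb)) (Chom H k (qm 0 (vtx a)) (qm 0 (vtx bb)))"
  unfolding bij_betw_def
proof
  show "inj_on (Cmap H qm k) (Chom S k (vtx a) (vtx bb))"
  proof (rule inj_onI)
    fix c1 c2 assume c1: "c1 \<in> Chom S k (vtx a) (vtx bb)" and c2: "c2 \<in> Chom S k (vtx a) (vtx bb)"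
      and eq: "Cmap H qm k c1 = Cmap H qm k c2"
    obtain Y1 where Y1: "c1 = ceq S k `` {Y1}" "cvalid S k (vtx a) (vtx bb) Y1" using c1 by (auto simp: Chom_def)
    obtain Y2 where Y2: "c2 = ceq S k `` {Y2}" "cvalid S k (vtx a) (vtx bb) Y2" using c2 by (auto simp: Chom_def)
    have h: "(map dq Y1, map dq Y2) \<in> ceq H k" using eq Y1 Y2 by (simp add: Cmap_class ceq_class_eq)
    have "(Y1, Y2) \<in> ceq S k"
    proof (cases "vq a = vq bb")
      case True
      have ln: "lnk a bb" using final_lnk[OF True ad] .
      have "(Y1, pre k a bb) \<in> ceq S k" "(Y2, pre k a bb) \<in> ceq S k"
        using lrel_ceq[OF loop_norm[OF Y1(2) ln]] lrel_ceq[OF loop_norm[OF Y2(2) ln]] by auto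
      then show ?thesis using ceq_trans ceq_sym by blast
    next
      case False
      show ?thesis using inj_case[OF False ab ad Y1(2) Y2(2) h] .
    qed
    then show "c1 = c2" using Y1 Y2 by (simp add: ceq_class_eq)
  qed
  show "Cmap H qm k ` Chom S k (vtx a) (vtx bb) = Chom H k (qm 0 (vtx a)) (qm 0 (vtx bb))"
  proof
    show "Cmap H qm k ` Chom S k (vtx a) (vtx bb) \<subseteq> Chom H k (qm 0 (vtx a)) (qm 0 (vtx bb))"
    proof
      fix c assume "c \<in> Cmap H qm k ` Chom S k (vtx a) (vtx bb)"
      then obtain Y where Y: "c = Cmap H qm k (ceq S k `` {Y})" "cvalid S k (vtx a) (vtx bb) Y"
        by (auto simp: Chom_def)
      have "cvalid H k (qm 0 (vtx a)) (qm 0 (vtx bb)) (map dq Y)" using cvalid_q[OF Y(2)] .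
      then show "c \<in> Chom H k (qm 0 (vtx a)) (qm 0 (vtx bb))" using Y by (auto simp: Chom_def Cmap_class)
    qed
    show "Chom H k (qm 0 (vtx a)) (qm 0 (vtx bb)) \<subseteq> Cmap H qm k ` Chom S k (vtx a) (vtx bb)"
    proof
      fix c assume "c \<in> Chom H k (qm 0 (vtx a)) (qm 0 (vtx bb))"
      then obtain X where X: "c = ceq H k `` {X}" "cvalid H k (vq a) (vq bb) X" by (auto simp: Chom_def)
      note SC = surj_case[OF X(2) ab ad]
      define Y where "Y = Lam k a bb X"
      have "ceq S k `` {Y} \<in> Chom S k (vtx a) (vtx bb)" using SC by (auto simp: Chom_def Y_def)
      moreover have "Cmap H qm k (ceq S k `` {Y}) = c" using SC X(1) by (simp add: Cmap_class ceq_class_eq Y_def)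
      ultimately show "c \<in> Cmap H qm k ` Chom S k (vtx a) (vtx bb)" by force
    qed
  qed
qed

end


declare One_nat_def[simp del]

lemma degen_insert: "j \<noteq> i \<Longrightarrow> degen i (insert j u) = insert (if j < i then j else j - 1) (degen i u)"
  by (auto simp: degen_def)

lemma degen_notin: "j \<noteq> i \<Longrightarrow> j \<notin> u \<Longrightarrow> (if j < i then j else j - 1) \<notin> degen i u"
proof
  assume h: "j \<noteq> i" "j \<notin> u" "(if j < i then j else j - 1) \<in> degen i u"
  show False
  proof (cases "j < i")
    case True then show False using h by (auto simp: degen_def)
  next
    case False
    then have j: "j - 1 \<in> degen i u" "i < j" using h by auto
    then obtain x where x: "x \<in> u" "(x < i \<and> x = j - 1) \<or> (i < x \<and> x - 1 = j - 1)" unfolding degen_def by auto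
    show False
    proof (cases "x < i \<and> x = j - 1")
      case True then show False using j(2) by linarith
    next
      case False
      then have "x = j" using x(2) j(2) by linarith
      then show False using h(2) x(1) by simp
    qed
  qed
qed

lemma edge_cmor: "1 \<le> m \<Longrightarrow> j \<in> {1..m} \<Longrightarrow> u \<subseteq> {1..m} \<Longrightarrow> j \<notin> u \<Longrightarrow> cmor 1 m (edge u (insert j u))"
proof (induction m arbitrary: j u rule: nat_induct_at_least)
  case base
  then have "j = 1" "u = {}" by auto
  then show ?case using cmor_edge01 by simp
next
  case (Suc m)
  define i :: nat where "i = (if j = 1 then 2 else 1)"
  have ij: "j \<noteq> i" "1 \<le> i" "i \<le> Suc m" using Suc.prems Suc.hyps by (auto simp: i_def)
  define j' where "j' = (if j < i then j else j - 1)"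
  have j': "j' \<in> {1..m}" using Suc.prems ij by (auto simp: j'_def)
  have u': "degen i u \<subseteq> {1..m}" using degen_range[OF Suc.prems(2) ij(2,3)] .
  have nj: "j' \<notin> degen i u" using degen_notin[OF ij(1) Suc.prems(3)] by (simp add: j'_def)
  have IH: "cmor 1 m (edge (degen i u) (insert j' (degen i u)))" using Suc.IH[OF j' u' nj] .
  have ins: "degen i (insert j u) = insert j' (degen i u)" using degen_insert[OF ij(1)] by (simp add: j'_def)
  have f1: "face i (i \<in> u) (degen i u) = u" using face_degen[OF ij(2)] .
  have f2: "face i (i \<in> u) (insert j' (degen i u)) = insert j u"
    using face_degen[OF ij(2), of "insert j u"] ins ij(1) by simp
  have "rest 1 (face i (i \<in> u) \<circ> edge (degen i u) (insert j' (degen i u))) = edge u (insert j u)"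
  proof
    fix A show "rest 1 (face i (i \<in> u) \<circ> edge (degen i u) (insert j' (degen i u))) A = edge u (insert j u) A"
      using f1 f2 by (auto simp: rest_def edge_def)
  qed
  then show ?case using cmor.cface[OF IH ij(2,3), of "i \<in> u"] by simp
qed

lemma crit_cmor: "2 \<le> n \<Longrightarrow> 1 \<le> i \<Longrightarrow> i \<le> n \<Longrightarrow> cmor 1 n (crit n i e)"
proof -
  assume h: "2 \<le> n" "1 \<le> i" "i \<le> n"
  have "crit n i e = edge (if e then {} else {1..n} - {i}) (insert i (if e then {} else {1..n} - {i}))"
    using h by (auto simp: crit_def edge_def rest_def fun_eq_iff insert_absorb)
  moreover have "cmor 1 n (edge (if e then {} else {1..n} - {i}) (insert i (if e then {} else {1..n} - {i})))"
    by (rule edge_cmor) (use h in auto)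
  ultimately show ?thesis by simp
qed

lemma cube_cub: "2 \<le> n \<Longrightarrow> 1 \<le> i \<Longrightarrow> i \<le> n \<Longrightarrow> cub (cube n) n i e"
proof (unfold_locales)
  assume h: "2 \<le> n" "1 \<le> i" "i \<le> n"
  show "\<And>x m. x \<in> cells (cube n) m \<Longrightarrow> cmor m n x" by (simp add: cube_def cells_def)
  show "act (cube n) = (\<lambda>m m' f x. rest m (x \<circ> f))" by (simp add: cube_def act_def)
  show "\<And>x N M f. x \<in> cells (cube n) N \<Longrightarrow> cmor M N f \<Longrightarrow> rest M (x \<circ> f) \<in> cells (cube n) M"
    by (simp add: cube_def cells_def cmor_comp)
  show "crit n i e \<in> cells (cube n) 1" using crit_cmor[OF h] by (simp add: cube_def cells_def)
  show "\<And>v. v \<subseteq> {1..n} \<Longrightarrow> vtx v \<in> cells (cube n) 0" by (simp add: cube_def cells_def vtx_cmor)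
  show "\<And>y N. y \<in> cells (cube n) N \<Longrightarrow> \<exists>M F g. F \<in> cells (cube n) M \<and> cmor N M g \<and> y = rest N (F \<circ> g) \<and> inj_on F (Pow {1..M})"
  proof -
    fix y N assume y: "y \<in> cells (cube n) N"
    then have yc: "cmor N n y" by (simp add: cube_def cells_def)
    have "y = rest N (rest n id \<circ> y)"
      using cmor_range[OF yc] cmor_supp[OF yc] by (auto simp: rest_def fun_eq_iff)
    moreover have "inj_on (rest n id) (Pow {1..n})" by (auto simp: inj_on_def rest_def)
    moreover have "rest n id \<in> cells (cube n) n" using cmor.cid by (simp add: cube_def cells_def)
    ultimately show "\<exists>M F g. F \<in> cells (cube n) M \<and> cmor N M g \<and> y = rest N (F \<circ> g) \<and> inj_on F (Pow {1..M})"
      using yc by blast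
  qed
qed

lemma box_cells: "cells (box n i e) m = {f. cmor m n f \<and> (\<exists>j d g. 1 \<le> j \<and> j \<le> n \<and> (j, d) \<noteq> (i, e)
                     \<and> cmor m (n - 1) g \<and> f = rest m (face j d \<circ> g))}"
  by (simp add: box_def cells_def)

lemma box_cub: "2 \<le> n \<Longrightarrow> 1 \<le> i \<Longrightarrow> i \<le> n \<Longrightarrow> cub (box n i e) n i e"
proof (unfold_locales)
  assume h: "2 \<le> n" "1 \<le> i" "i \<le> n"
  define j where "j = (if i = 1 then 2 else (1::nat))"
  have j: "1 \<le> j" "j \<le> n" "j \<noteq> i" using h by (auto simp: j_def)
  have nS: "n = Suc (n - 1)" using h by simp
  have jS: "j \<le> Suc (n - 1)" using j nS by simp
  show "\<And>x m. x \<in> cells (box n i e) m \<Longrightarrow> cmor m n x" by (simp add: box_cells)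
  show "act (box n i e) = (\<lambda>m m' f x. rest m (x \<circ> f))" by (simp add: box_def act_def)
  show "\<And>x N M f. x \<in> cells (box n i e) N \<Longrightarrow> cmor M N f \<Longrightarrow> rest M (x \<circ> f) \<in> cells (box n i e) M"
  proof -
    fix x N M f assume x: "x \<in> cells (box n i e) N" and f: "cmor M N f"
    then obtain j d g where jd: "1 \<le> j" "j \<le> n" "(j, d) \<noteq> (i, e)" "cmor N (n - 1) g" "x = rest N (face j d \<circ> g)"
      and xc: "cmor N n x" by (auto simp: box_cells)
    have "rest M (x \<circ> f) = rest M (face j d \<circ> rest M (g \<circ> f))"
      using jd(5) cmor_range[OF f] by (auto simp: rest_def fun_eq_iff)
    then show "rest M (x \<circ> f) \<in> cells (box n i e) M"
      using jd cmor_comp[OF jd(4) f] cmor_comp[OF xc f] by (auto simp: box_cells)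
  qed
  show "crit n i e \<in> cells (box n i e) 1"
  proof -
    define P0 where "P0 = (if e then {} else {1..n} - {i})"
    have cr: "cmor 1 n (crit n i e)" using crit_cmor[OF h] .
    have ce: "crit n i e = edge P0 (insert i P0)"
      using h by (auto simp: crit_def edge_def rest_def fun_eq_iff P0_def insert_absorb)
    define g where "g = rest 1 (degen j \<circ> crit n i e)"
    have g: "cmor 1 (n - 1) g" using cmor.cdegen[of 1 "n - 1" "crit n i e" j] cr nS j(1) jS by (simp add: g_def)
    have jp: "(j \<in> P0) = (\<not> e)" using j by (auto simp: P0_def)
    have "rest 1 (face j (\<not> e) \<circ> g) = crit n i e"
    proof
      fix A show "rest 1 (face j (\<not> e) \<circ> g) A = crit n i e A"
      proof (cases "A \<subseteq> {1..1}")
        case True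
        then have "A = {} \<or> A = {1}" by auto
        moreover have "face j (\<not> e) (degen j P0) = P0" using face_degen[OF j(1), of P0] jp by simp
        moreover have "face j (\<not> e) (degen j (insert i P0)) = insert i P0"
          using face_degen[OF j(1), of "insert i P0"] jp j(3) by simp
        ultimately show ?thesis unfolding ce g_def by (auto simp: rest_def edge_def)
      next
        case False then show ?thesis using cmor_supp[OF cr False] by (simp add: rest_def)
      qed
    qed
    then have fc: "crit n i e = rest 1 (face j (\<not> e) \<circ> g)" by simp
    have ne: "(j, \<not> e) \<noteq> (i, e)" using j(3) by simp
    show ?thesis unfolding box_cells mem_Collect_eq
      apply (rule conjI[OF cr])
      apply (rule exI[of _ j], rule exI[of _ "\<not> e"], rule exI[of _ g])
      by (intro conjI; (rule j(1) | rule j(2) | rule ne | rule g | rule fc))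
  qed
  show "\<And>v. v \<subseteq> {1..n} \<Longrightarrow> vtx v \<in> cells (box n i e) 0"
  proof -
    fix v :: "nat set" assume v: "v \<subseteq> {1..n}"
    have dv: "degen j v \<subseteq> {1..n - 1}" using degen_range[of v "n - 1" j] v nS j(1) jS by simp
    have "vtx v = rest 0 (face j (j \<in> v) \<circ> vtx (degen j v))"
      using face_degen[OF j(1), of v] by (auto simp: vtx_def rest_def fun_eq_iff)
    then show "vtx v \<in> cells (box n i e) 0"
      using vtx_cmor[OF v] vtx_cmor[OF dv] j by (auto simp: box_cells)
  qed
  show "\<And>y N. y \<in> cells (box n i e) N \<Longrightarrow> \<exists>M F g. F \<in> cells (box n i e) M \<and> cmor N M g \<and> y = rest N (F \<circ> g) \<and> inj_on F (Pow {1..M})"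
  proof -
    fix y N assume y: "y \<in> cells (box n i e) N"
    then obtain j d g where jd: "1 \<le> j" "j \<le> n" "(j, d) \<noteq> (i, e)" "cmor N (n - 1) g" "y = rest N (face j d \<circ> g)"
      by (auto simp: box_cells)
    define F where "F = rest (n - 1) (face j d)"
    have Fc: "cmor (n - 1) n F" using face_cell[of j "n - 1" d] jd nS by (simp add: F_def)
    have "F = rest (n - 1) (face j d \<circ> rest (n - 1) id)" by (auto simp: F_def rest_def fun_eq_iff)
    then have Fb: "F \<in> cells (box n i e) (n - 1)" using Fc jd cmor.cid[of "n - 1"] by (auto simp: box_cells)
    have "y = rest N (F \<circ> g)" using jd(5) cmor_range[OF jd(4)] by (auto simp: F_def rest_def fun_eq_iff)
    moreover have "inj_on F (Pow {1..n - 1})"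
      using face_inj[of j d] by (auto simp: F_def inj_on_def rest_def)
    ultimately show "\<exists>M F g. F \<in> cells (box n i e) M \<and> cmor N M g \<and> y = rest N (F \<circ> g) \<and> inj_on F (Pow {1..M})"
      using Fb jd(4) by blast
  qed
qed

theorem lemma4p2:
  fixes n i :: nat and e :: bool and a b :: "nat set"
  assumes "2 \<le> n" and "1 \<le> i" and "i \<le> n"
    and "a \<subseteq> {1..n}" and "b \<subseteq> {1..n}"
    and "e \<Longrightarrow> a \<noteq> {i}"
    and "\<not> e \<Longrightarrow> b \<noteq> {1..n} - {i}"
  shows "(\<forall>k. bij_betw (Cmap (box_hat n i e) (qmap n i e) k)
                 (Chom (box n i e) k (vtx a) (vtx b))
                 (Chom (box_hat n i e) k (qmap n i e 0 (vtx a)) (qmap n i e 0 (vtx b))))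
       \<and> (\<forall>k. bij_betw (Cmap (cube_hat n i e) (qmap n i e) k)
                 (Chom (cube n) k (vtx a) (vtx b))
                 (Chom (cube_hat n i e) k (qmap n i e 0 (vtx a)) (qmap n i e 0 (vtx b))))"
proof (intro conjI allI)
  fix k
  interpret B: cub "box n i e" n i e using box_cub assms(1-3) .
  have "e \<longrightarrow> a \<noteq> B.P1" "\<not> e \<longrightarrow> b \<noteq> B.P0" using assms(6,7) B.P_e by blast+
  then have "B.adm a" "B.adm' b" unfolding B.adm_def B.adm'_def by blast+
  then show "bij_betw (Cmap (box_hat n i e) (qmap n i e) k)
                 (Chom (box n i e) k (vtx a) (vtx b))
                 (Chom (box_hat n i e) k (qmap n i e 0 (vtx a)) (qmap n i e 0 (vtx b)))"
    using B.main_bij[OF assms(4,5)] by (simp add: box_hat_def)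
next
  fix k
  interpret C: cub "cube n" n i e using cube_cub assms(1-3) .
  have "e \<longrightarrow> a \<noteq> C.P1" "\<not> e \<longrightarrow> b \<noteq> C.P0" using assms(6,7) C.P_e by blast+
  then have "C.adm a" "C.adm' b" unfolding C.adm_def C.adm'_def by blast+
  then show "bij_betw (Cmap (cube_hat n i e) (qmap n i e) k)
                 (Chom (cube n) k (vtx a) (vtx b))
                 (Chom (cube_hat n i e) k (qmap n i e 0 (vtx a)) (qmap n i e 0 (vtx b)))"
    using C.main_bij[OF assms(4,5)] by (simp add: cube_hat_def)
qed


end
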